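(* Let $r\in(0,1/2)$ and consider the independent-coding distributed delay diversity scheme described in the context, with fixed deterministic delays and relative delay $T_0=|\tau_2-\tau_1|$. Let $P(\mathrm{SNR})=\Pr[I_{TDA}<R,\ |\mathcal D(s)|=2]$. (a) If $T_0B_w>2$ and $T_0B_w$ is not an integer, then there exist constants $c_1,c_2>0$ and $\mathrm{SNR}_0$ such that for all $\mathrm{SNR}\ge\mathrm{SNR}_0$, $$c_1\,\widetilde{\mathrm{SNR}}^{-(3-4r)}\le P(\mathrm{SNR})\le c_2\,\widetilde{\mathrm{SNR}}^{-(3-6r)}.$$ (b) If $T_0B_w$ is a positive integer, then there exist constants $c_1,c_2>0$ and $\mathrm{SNR}_0$ such that for all $\mathrm{SNR}\ge\mathrm{SNR}_0$, $$c_1\,\widetilde{\mathrm{SNR}}^{-(3-4r)}\le P(\mathrm{SNR})\le c_2\,\widetilde{\mathrm{SNR}}^{-(3-4r)}.$$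
   Context: Network: a source $N_S$, two relays $N_{R_1},N_{R_2}$ and a destination $N_D$. The gains $\alpha_{i,j}$, $i\in\{S,R_1,R_2\}$, $j\in\{R_1,R_2,D\}$, $i\neq j$, are mutually independent zero-mean circularly symmetric complex Gaussian random variables with variances $\sigma^2_{i,j}>0$. For $\mathrm{SNR}>0$ set $\rho_0=\frac23\mathrm{SNR}$ and $\widetilde{\mathrm{SNR}}=\sigma^2_{S,D}\mathrm{SNR}$. The target rate is $R=r\log(1+\mathrm{SNR}\,\sigma^2_{S,D})$. Relay $R_k$ belongs to the decoding set $\mathcal D(s)$ iff $\frac12\log(1+\rho_0|\alpha_{S,R_k}|^2)\ge R$. Independent-coding distributed delay diversity scheme: - Signals have baseband bandwidth $B_w>0$. - In phase 2 all successful relays send the same Gaussian codeword, independent of the source codeword. - The signal from relay $R_k$ reaches $N_D$ with deterministic delay $\tau_k\ge0$. - Conditioned on $\mathcal D(s)$, the mutual information is $$I_{TDA}=\frac12\log(1+\rho_0|\alpha_{S,D}|^2)+\frac{1}{2B_w}\int_{-B_w/2}^{B_w/2}\log\left(1+\rho_0\Big|\sum_{R_k\in\mathcal D(s)}\alpha_{R_k,D}e^{j2\pi f\tau_k}\Big|^2\right)df,$$ where an empty sum equals $0$. *)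

theory Defs
  imports "HOL-Probability.Probability"
begin

datatype node = S | R1 | R2 | D

definition links :: "(node \<times> node) set" where
  "links = {(i, j). i \<in> {S, R1, R2} \<and> j \<in> {R1, R2, D} \<and> i \<noteq> j}"

text \<open>Density (w.r.t. Lebesgue measure on the complex plane) of a zero-mean
circularly symmetric complex Gaussian with variance s.\<close>
definition cgauss_density :: "real \<Rightarrow> complex \<Rightarrow> ennreal" where
  "cgauss_density s z = ennreal (exp (- (cmod z)\<^sup>2 / s) / (pi * s))"

definition rho0 :: "real \<Rightarrow> real" where
  "rho0 snr = 2 / 3 * snr"

text \<open>Target rate R = r log(1 + SNR sigma_SD^2) (natural logarithm used throughout;
the base is irrelevant since the same base is used everywhere).\<close>
definition rate :: "real \<Rightarrow> real \<Rightarrow> real \<Rightarrow> real" where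
  "rate r sSD snr = r * ln (1 + snr * sSD)"

definition decodes :: "real \<Rightarrow> real \<Rightarrow> complex \<Rightarrow> bool" where
  "decodes snr R a \<longleftrightarrow> ln (1 + rho0 snr * (cmod a)\<^sup>2) / 2 \<ge> R"

text \<open>Mutual information I_TDA of the independent-coding delay diversity scheme,
conditioned on a decoding set Dset (a subset of {R1,R2}); g k is the gain of the
link from relay k to the destination, tau k its delay, Bw the bandwidth.\<close>
definition I_TDA ::
  "real \<Rightarrow> real \<Rightarrow> (node \<Rightarrow> real) \<Rightarrow> node set \<Rightarrow> complex \<Rightarrow> (node \<Rightarrow> complex) \<Rightarrow> real" where
  "I_TDA snr Bw tau Dset aSD g =
     ln (1 + rho0 snr * (cmod aSD)\<^sup>2) / 2
     + integral {- Bw / 2 .. Bw / 2}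
         (\<lambda>f. ln (1 + rho0 snr *
              (cmod (\<Sum>k\<in>Dset. g k * cis (2 * pi * f * tau k)))\<^sup>2)) / (2 * Bw)"

definition decoding_set :: "real \<Rightarrow> real \<Rightarrow> (node \<Rightarrow> complex) \<Rightarrow> node set" where
  "decoding_set snr R h = {k \<in> {R1, R2}. decodes snr R (h k)}"

definition outage_prob ::
  "'a measure \<Rightarrow> (node \<Rightarrow> node \<Rightarrow> 'a \<Rightarrow> complex) \<Rightarrow> (node \<Rightarrow> node \<Rightarrow> real)
    \<Rightarrow> real \<Rightarrow> real \<Rightarrow> (node \<Rightarrow> real) \<Rightarrow> real \<Rightarrow> real" where
  "outage_prob M \<alpha> \<sigma>2 r Bw tau snr =
     (let R = rate r (\<sigma>2 S D) snr;
          Ds = (\<lambda>\<omega>. decoding_set snr R (\<lambda>k. \<alpha> S k \<omega>))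
      in measure M {\<omega> \<in> space M.
           I_TDA snr Bw tau (Ds \<omega>) (\<alpha> S D \<omega>) (\<lambda>k. \<alpha> k D \<omega>) < R
           \<and> card (Ds \<omega>) = 2})"

end

theory Submission imports Defs "HOL-Real_Asymp.Real_Asymp"
begin


lemma cos_lb: "(x::real) \<ge> 0 \<Longrightarrow> cos x \<ge> 1 - x\<^sup>2 / 2"
proof -
  assume x: "x \<ge> 0"
  have "(\<lambda>y. cos y - 1 + y\<^sup>2/2) 0 \<le> (\<lambda>y. cos y - 1 + y\<^sup>2/2) x"
  proof (rule DERIV_nonneg_imp_nondecreasing[OF x])
    fix y assume y1: "0 \<le> y" and y2: "y \<le> x"
    note y = y1 y2
    show "\<exists>d. ((\<lambda>y. cos y - 1 + y\<^sup>2/2) has_real_derivative d) (at y) \<and> 0 \<le> d"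
      by (rule exI[of _ "- sin y + y"]) (use y sin_x_le_x[of y] in \<open>auto intro!: derivative_eq_intros\<close>)
  qed
  then show ?thesis by simp
qed

lemma sin_lb: "(x::real) \<ge> 0 \<Longrightarrow> sin x \<ge> x - x^3 / 6"
proof -
  assume x: "x \<ge> 0"
  have "(\<lambda>y. sin y - y + y^3/6) 0 \<le> (\<lambda>y. sin y - y + y^3/6) x"
  proof (rule DERIV_nonneg_imp_nondecreasing[OF x])
    fix y assume y1: "0 \<le> y" and y2: "y \<le> x"
    note y = y1 y2
    show "\<exists>d. ((\<lambda>y. sin y - y + y^3/6) has_real_derivative d) (at y) \<and> 0 \<le> d"
      by (rule exI[of _ "cos y - 1 + y\<^sup>2/2"]) (use y cos_lb[of y] in \<open>auto intro!: derivative_eq_intros simp: power2_eq_square\<close>)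
  qed
  then show ?thesis by simp
qed

lemma one_minus_cos_lb:
  assumes "\<bar>v::real\<bar> \<le> pi" shows "1 - cos v \<ge> v\<^sup>2 / 18"
proof -
  define u where "u = \<bar>v\<bar> / 2"
  have u0: "u \<ge> 0" and u2: "u \<le> 2" using assms pi_less_4 by (auto simp: u_def)
  have "sin u \<ge> u - u^3/6" using sin_lb u0 by auto
  also have "u - u^3/6 \<ge> u / 3"
  proof -
    have "u^2 \<le> 4" using u0 u2 by (metis power_mono power2_eq_square numeral_times_numeral semiring_norm(12) num_double) 
    then have "u^3 \<le> 4 * u" using u0 by (simp add: power3_eq_cube power2_eq_square) (metis mult.commute mult_right_mono)
    then show ?thesis by simp
  qed
  finally have s: "sin u \<ge> u / 3" .
  have "cos v = cos (2 * u)" unfolding u_def by (cases "v \<ge> 0") auto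
  also have "\<dots> = 1 - 2 * (sin u)\<^sup>2" by (simp add: cos_double_sin)
  finally have "1 - cos v = 2 * (sin u)\<^sup>2" by simp
  moreover have "(sin u)\<^sup>2 \<ge> (u/3)\<^sup>2" using s u0 by (intro power_mono) auto
  moreover have "(u/3)\<^sup>2 = v\<^sup>2 / 36" unfolding u_def by (simp add: power2_eq_square)
  ultimately show ?thesis by simp
qed



definition hE :: "real \<Rightarrow> real" where
  "hE v = v * min 0 (ln \<bar>v\<bar>) - max (-1) (min 1 v)"

lemma xlnx_tendsto: "((\<lambda>v::real. v * ln \<bar>v\<bar>) \<longlongrightarrow> 0) (at 0)"
proof -
  have 1: "((\<lambda>v::real. v * ln \<bar>v\<bar>) \<longlongrightarrow> 0) (at_right 0)" by real_asymp
  have 2: "((\<lambda>v::real. v * ln \<bar>v\<bar>) \<longlongrightarrow> 0) (at_left 0)" by real_asymp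
  show ?thesis using 1 2 by (simp add: filterlim_split_at)
qed

lemma xmin_aux: "norm ((x::real) * min 0 (ln \<bar>x\<bar>)) \<le> norm (x * ln \<bar>x\<bar>) * 1"
proof -
  have "\<bar>min 0 (ln \<bar>x\<bar>)\<bar> \<le> \<bar>ln \<bar>x\<bar>\<bar>" by auto
  then have "\<bar>x\<bar> * \<bar>min 0 (ln \<bar>x\<bar>)\<bar> \<le> \<bar>x\<bar> * \<bar>ln \<bar>x\<bar>\<bar>" by (intro mult_left_mono) auto
  then show ?thesis by (simp add: abs_mult)
qed

lemma hE_cont: "isCont hE v"
proof (cases "v = 0")
  case True
  have "((\<lambda>v::real. v * min 0 (ln \<bar>v\<bar>)) \<longlongrightarrow> 0) (at 0)"
    by (rule tendsto_0_le[OF xlnx_tendsto always_eventually, where K=1]) (use xmin_aux in blast)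
  then have "((\<lambda>v::real. v * min 0 (ln \<bar>v\<bar>) - max (-1) (min 1 v)) \<longlongrightarrow> 0 - max (-1) (min 1 0)) (at 0)"
    by (intro tendsto_intros) auto
  then show ?thesis using True unfolding isCont_def hE_def by simp
next
  case False
  then show ?thesis unfolding hE_def by (intro continuous_intros) auto
qed

lemma hE_deriv:
  assumes "v \<notin> {-1, 0, 1}"
  shows "(hE has_real_derivative min 0 (ln \<bar>v\<bar>)) (at v)"
proof -
  consider "v < -1" | "-1 < v" "v < 0" | "0 < v" "v < 1" | "1 < v" using assms by force
  then show ?thesis
  proof cases
    case 1
    have e: "min 0 (ln \<bar>v\<bar>) = 0" using 1 by auto
    have "((\<lambda>_. 1::real) has_real_derivative 0) (at v)" by (rule DERIV_const)
    then show ?thesis unfolding e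
      apply (rule has_field_derivative_transform_within_open[where S="{..<-1}"])
      using 1 by (auto simp: hE_def)
  next
    case 2
    have d: "((\<lambda>v. v * ln (- v) - v) has_real_derivative ln (- v)) (at v)"
      using 2 by (auto intro!: derivative_eq_intros simp: field_simps)
    have e: "min 0 (ln \<bar>v\<bar>) = ln (- v)" using 2 by auto
    show ?thesis unfolding e
      apply (rule has_field_derivative_transform_within_open[OF d, where S="{-1<..<0}"])
      using 2 by (auto simp: hE_def)
  next
    case 3
    have d: "((\<lambda>v. v * ln v - v) has_real_derivative ln v) (at v)"
      using 3 by (auto intro!: derivative_eq_intros simp: field_simps)
    have e: "min 0 (ln \<bar>v\<bar>) = ln v" using 3 by auto
    show ?thesis unfolding e
      apply (rule has_field_derivative_transform_within_open[OF d, where S="{0<..<1}"])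
      using 3 by (auto simp: hE_def)
  next
    case 4
    have e: "min 0 (ln \<bar>v\<bar>) = 0" using 4 by auto
    have "((\<lambda>_. -1::real) has_real_derivative 0) (at v)" by (rule DERIV_const)
    then show ?thesis unfolding e
      apply (rule has_field_derivative_transform_within_open[where S="{1<..}"])
      using 4 by (auto simp: hE_def)
  qed
qed

lemma hE_bound: "\<bar>hE v\<bar> \<le> 1"
proof -
  have key: "w - w * ln w \<le> 1" if "0 < w" for w :: real
  proof -
    have "ln (1/w) \<le> 1/w - 1" using that by (intro ln_le_minus_one) auto
    then have "- ln w \<le> 1/w - 1" using that by (simp add: ln_div)
    then have "w * (- ln w) \<le> w * (1/w - 1)" using that by (intro mult_left_mono) auto
    moreover have "w * (1/w - 1) = 1 - w" using that by (simp add: algebra_simps)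
    ultimately show ?thesis by linarith
  qed
  consider "v \<le> -1" | "-1 < v" "v < 0" | "v = 0" | "0 < v" "v < 1" | "1 \<le> v" by force
  then show ?thesis
  proof cases
    case 2
    have "ln (- v) \<le> 0" using 2 by auto
    then have a: "v * ln (-v) \<ge> 0" using 2 by (simp add: mult_nonpos_nonpos)
    have "(-v) - (-v) * ln (-v) \<le> 1" using key[of "-v"] 2 by auto
    then show ?thesis using 2 a by (auto simp: hE_def abs_if min_def max_def)
  next
    case 4
    have "ln v \<le> 0" using 4 by auto
    then have a: "v * ln v \<le> 0" using 4 by (simp add: mult_nonneg_nonpos)
    have "v - v * ln v \<le> 1" using key[of v] 4 by auto
    then show ?thesis using 4 a by (auto simp: hE_def abs_if min_def max_def)
  qed (auto simp: hE_def min_def max_def)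
qed

lemma h_has_integral:
  assumes "(a::real) \<le> b"
  shows "((\<lambda>f. min 0 (ln \<bar>f - z\<bar>)) has_integral (hE (b - z) - hE (a - z))) {a..b}"
proof -
  have "((\<lambda>f. min 0 (ln \<bar>f - z\<bar>)) has_integral ((\<lambda>f. hE (f - z)) b - (\<lambda>f. hE (f - z)) a)) {a..b}"
  proof (rule fundamental_theorem_of_calculus_strong[where S="{z - 1, z, z + 1}"])
    show "continuous_on {a..b} (\<lambda>f. hE (f - z))"
      proof -
      have "continuous_on UNIV hE" by (intro continuous_at_imp_continuous_on ballI hE_cont)
      then show ?thesis by (rule continuous_on_compose2) (auto intro!: continuous_intros)
    qed
  next
    fix x assume "x \<in> {a..b} - {z - 1, z, z + 1}"
    then have "x - z \<notin> {-1, 0, 1}" by auto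
    from hE_deriv[OF this] have "((\<lambda>f. hE (f - z)) has_real_derivative min 0 (ln \<bar>x - z\<bar>) * 1) (at x)"
      by (intro DERIV_chain2[of hE]) (auto intro!: derivative_eq_intros)
    then show "((\<lambda>f. hE (f - z)) has_vector_derivative min 0 (ln \<bar>x - z\<bar>)) (at x)"
      by (simp add: has_real_derivative_iff_has_vector_derivative)
  qed (use assms in auto)
  then show ?thesis by simp
qed

lemma h_integral_ge:
  assumes "(a::real) \<le> b"
  shows "(\<lambda>f. min 0 (ln \<bar>f - z\<bar>)) integrable_on {a..b}"
    and "integral {a..b} (\<lambda>f. min 0 (ln \<bar>f - z\<bar>)) \<ge> -2"
proof -
  note H = h_has_integral[OF assms, of z]
  show "(\<lambda>f. min 0 (ln \<bar>f - z\<bar>)) integrable_on {a..b}" using H by blast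
  have "integral {a..b} (\<lambda>f. min 0 (ln \<bar>f - z\<bar>)) = hE (b - z) - hE (a - z)" using H by blast
  moreover have "\<bar>hE (b - z)\<bar> \<le> 1" "\<bar>hE (a - z)\<bar> \<le> 1" by (rule hE_bound)+
  ultimately show "integral {a..b} (\<lambda>f. min 0 (ln \<bar>f - z\<bar>)) \<ge> -2" by linarith
qed



lemma quad_aux:
  fixes b co :: real
  assumes "0 \<le> b" "b \<le> 1" "-1 \<le> co" "co \<le> 1"
  shows "1 + b\<^sup>2 + 2 * b * co \<ge> (1 + co) / 2"
proof -
  have "1 + b\<^sup>2 + 2 * b * co - (1 + co) / 2 = (b + co)\<^sup>2 - (co + 1) * (co - 1/2)"
    by (simp add: power2_eq_square field_simps)
  moreover have "(co + 1) * (co - 1/2) \<le> 0 \<or> (b + co)\<^sup>2 \<ge> (co + 1) * (co - 1/2)"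
  proof (cases "co \<le> 1/2")
    case True then show ?thesis using assms by (auto intro: mult_nonneg_nonpos)
  next
    case False
    then have "b + co \<ge> co" "co \<ge> 0" using assms by auto
    then have "(b + co)\<^sup>2 \<ge> co\<^sup>2" by (intro power_mono) auto
    moreover have "co\<^sup>2 \<ge> (co + 1) * (co - 1/2)" using assms by (simp add: power2_eq_square algebra_simps)
    ultimately show ?thesis by linarith
  qed
  ultimately show ?thesis using zero_le_power2[of "b+co"] by (elim disjE) linarith+
qed

lemma cos_shift: "cos (v + pi + 2 * pi * of_int m) = - cos v"
  by (simp add: cos_add sin_add)

lemma pointwise_lb:
  fixes A b c f \<phi> :: real and m :: int
  assumes A: "A \<ge> 0" and b: "0 \<le> b" "b \<le> 1" and c: "c \<noteq> 0"
    and v: "\<bar>\<phi> + c * f - pi - 2 * pi * of_int m\<bar> \<le> pi"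
    and ne: "f \<noteq> (pi + 2 * pi * of_int m - \<phi>) / c"
  shows "ln (1 + A * (1 + b\<^sup>2 + 2 * b * cos (\<phi> + c * f))) \<ge>
           ln (1 + A) + ln (c\<^sup>2 / 36) + 2 * ln \<bar>f - (pi + 2 * pi * of_int m - \<phi>) / c\<bar>"
proof -
  define v where "v = \<phi> + c * f - pi - 2 * pi * of_int m"
  define d where "d = f - (pi + 2 * pi * of_int m - \<phi>) / c"
  have vd: "v = c * d" unfolding v_def d_def using c by (simp add: field_simps)
  have d0: "d \<noteq> 0" using ne unfolding d_def by simp
  have "cos (\<phi> + c * f) = cos (v + pi + 2 * pi * of_int m)" unfolding v_def by simp
  also have "\<dots> = - cos v" by (rule cos_shift)
  finally have cv: "cos (\<phi> + c * f) = - cos v" .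
  define g where "g = 1 + b\<^sup>2 + 2 * b * cos (\<phi> + c * f)"
  have "g \<ge> (1 + cos (\<phi> + c * f)) / 2" unfolding g_def using b by (intro quad_aux) auto
  moreover have "1 + cos (\<phi> + c * f) \<ge> v\<^sup>2 / 18" using one_minus_cos_lb[of v] v cv unfolding v_def by simp
  ultimately have gy: "g \<ge> v\<^sup>2 / 36" by simp
  have vpos: "v\<^sup>2 > 0" using vd d0 c by simp
  have "\<bar>v\<bar>\<^sup>2 \<le> pi\<^sup>2" using v unfolding v_def by (intro power_mono) auto
  then have "v\<^sup>2 \<le> pi\<^sup>2" by simp
  also have "pi\<^sup>2 \<le> 4\<^sup>2" using pi_less_4 pi_gt_zero by (intro power_mono) auto
  finally have y1: "v\<^sup>2 / 36 \<le> 1" by simp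
  have "(1 + A) * (v\<^sup>2 / 36) \<le> 1 + A * g"
  proof -
    have "(1 + A) * (v\<^sup>2 / 36) = v\<^sup>2 / 36 + A * (v\<^sup>2 / 36)" by (simp add: algebra_simps)
    also have "\<dots> \<le> 1 + A * g" using y1 gy A by (intro add_mono mult_left_mono) auto
    finally show ?thesis .
  qed
  then have "ln ((1 + A) * (v\<^sup>2 / 36)) \<le> ln (1 + A * g)" using A vpos by (intro ln_mono) auto
  moreover have "ln ((1 + A) * (v\<^sup>2 / 36)) = ln (1 + A) + ln (c\<^sup>2 / 36) + 2 * ln \<bar>d\<bar>"
  proof -
    have e1: "(1 + A) * (v\<^sup>2 / 36) = (1 + A) * (c\<^sup>2 / 36) * \<bar>d\<bar>^2" unfolding vd by (simp add: power2_eq_square)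
    have e2: "ln ((1 + A) * (c\<^sup>2 / 36) * \<bar>d\<bar>^2) = ln (1 + A) + ln (c\<^sup>2 / 36) + ln (\<bar>d\<bar>^2)"
    proof -
      have p1: "1 + A > 0" "c\<^sup>2 / 36 > 0" "\<bar>d\<bar>^2 > 0" using A c d0 by auto
      have p2: "(1 + A) * (c\<^sup>2 / 36) > 0" using p1 by simp
      show ?thesis by (simp only: ln_mult_pos[OF p2 p1(3)] ln_mult_pos[OF p1(1) p1(2)])
    qed
    have e3: "ln (\<bar>d\<bar>^2) = 2 * ln \<bar>d\<bar>" using ln_realpow[of "\<bar>d\<bar>" 2] d0 by simp
    show ?thesis by (simp only: e1 e2 e3)
  qed
  ultimately show ?thesis unfolding g_def d_def by simp
qed



lemma integrand_nonneg:
  fixes A b co :: real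
  assumes "A \<ge> 0" "0 \<le> b" "b \<le> 1" "-1 \<le> co" "co \<le> 1"
  shows "1 + b\<^sup>2 + 2 * b * co \<ge> 0" "ln (1 + A * (1 + b\<^sup>2 + 2 * b * co)) \<ge> 0"
proof -
  have "(1 + co) / 2 \<ge> 0" using assms(4) by simp
  then show g: "1 + b\<^sup>2 + 2 * b * co \<ge> 0" using quad_aux[OF assms(2-5)] by linarith
  then show "ln (1 + A * (1 + b\<^sup>2 + 2 * b * co)) \<ge> 0" using assms(1) by simp
qed

lemma card_W_bound:
  fixes L \<phi> :: real
  assumes L: "L > 0"
  shows "finite {m::int. \<bar>pi + 2 * pi * of_int m - \<phi>\<bar> \<le> L}"
    and "real (card {m::int. \<bar>pi + 2 * pi * of_int m - \<phi>\<bar> \<le> L}) \<le> L / pi + 1"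
proof -
  define W where "W = {m::int. \<bar>pi + 2 * pi * of_int m - \<phi>\<bar> \<le> L}"
  define lo where "lo = (\<phi> - pi - L) / (2 * pi)"
  define hi where "hi = (\<phi> - pi + L) / (2 * pi)"
  have sub: "W \<subseteq> {\<lceil>lo\<rceil>..\<lfloor>hi\<rfloor>}"
  proof
    fix m assume "m \<in> W"
    then have m: "\<phi> - pi - L \<le> 2 * pi * of_int m" "2 * pi * of_int m \<le> \<phi> - pi + L" unfolding W_def by auto
    have "lo \<le> of_int m" unfolding lo_def using m(1) pi_gt_zero by (simp add: pos_divide_le_eq mult.commute)
    moreover have "of_int m \<le> hi" unfolding hi_def using m(2) pi_gt_zero by (simp add: pos_le_divide_eq mult.commute)
    ultimately show "m \<in> {\<lceil>lo\<rceil>..\<lfloor>hi\<rfloor>}" by (simp add: ceiling_le le_floor_iff)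
  qed
  show "finite {m::int. \<bar>pi + 2 * pi * of_int m - \<phi>\<bar> \<le> L}" using finite_subset[OF sub] unfolding W_def by simp
  have "card W \<le> card {\<lceil>lo\<rceil>..\<lfloor>hi\<rfloor>}" by (rule card_mono[OF _ sub]) simp
  also have "\<dots> = nat (\<lfloor>hi\<rfloor> - \<lceil>lo\<rceil> + 1)" by simp
  finally have cw: "real (card W) \<le> real (nat (\<lfloor>hi\<rfloor> - \<lceil>lo\<rceil> + 1))" by linarith
  have hl: "hi - lo = L / pi" unfolding hi_def lo_def using pi_gt_zero by (simp add: field_simps)
  have "real (nat (\<lfloor>hi\<rfloor> - \<lceil>lo\<rceil> + 1)) \<le> L / pi + 1"
  proof (cases "\<lfloor>hi\<rfloor> - \<lceil>lo\<rceil> + 1 \<ge> 0")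
    case True
    then have "real (nat (\<lfloor>hi\<rfloor> - \<lceil>lo\<rceil> + 1)) = of_int \<lfloor>hi\<rfloor> - of_int \<lceil>lo\<rceil> + 1" by simp
    also have "\<dots> \<le> hi - lo + 1" using of_int_floor_le[of hi] le_of_int_ceiling[of lo] by linarith
    finally show ?thesis using hl by simp
  next
    case False
    then show ?thesis using L pi_gt_zero by simp
  qed
  then show "real (card {m::int. \<bar>pi + 2 * pi * of_int m - \<phi>\<bar> \<le> L}) \<le> L / pi + 1" using cw unfolding W_def by linarith
qed

lemma core_int:
  fixes Bw c :: real
  assumes Bw: "Bw > 0" and c: "c \<noteq> 0"
  shows "\<exists>C\<ge>0. \<forall>A \<phi> b. A \<ge> 0 \<longrightarrow> 0 \<le> b \<longrightarrow> b \<le> 1 \<longrightarrow>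
     integral {-Bw/2..Bw/2} (\<lambda>f. ln (1 + A * (1 + b\<^sup>2 + 2 * b * cos (\<phi> + c * f)))) \<ge> Bw * ln (1 + A) - C"
proof -
  define L where "L = \<bar>c\<bar> * Bw / 2 + pi"
  define K0 where "K0 = ln (c\<^sup>2 / 36)"
  define C where "C = Bw * \<bar>K0\<bar> + 4 * (L / pi + 1)"
  have L0: "L > 0" unfolding L_def using Bw pi_gt_zero by (simp add: add_nonneg_pos)
  have C0: "C \<ge> 0" unfolding C_def using L0 Bw pi_gt_zero by (simp add: add_nonneg_nonneg)
  have "\<forall>A \<phi> b. A \<ge> 0 \<longrightarrow> 0 \<le> b \<longrightarrow> b \<le> 1 \<longrightarrow>
     integral {-Bw/2..Bw/2} (\<lambda>f. ln (1 + A * (1 + b\<^sup>2 + 2 * b * cos (\<phi> + c * f)))) \<ge> Bw * ln (1 + A) - C"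
  proof (intro allI impI)
    fix A \<phi> b :: real
    assume A: "A \<ge> 0" and b: "0 \<le> b" "b \<le> 1"
    define I where "I f = ln (1 + A * (1 + b\<^sup>2 + 2 * b * cos (\<phi> + c * f)))" for f
    define fm where "fm m = (pi + 2 * pi * of_int m - \<phi>) / c" for m :: int
    define W where "W = {m::int. \<bar>pi + 2 * pi * of_int m - \<phi>\<bar> \<le> L}"
    have finW: "finite W" and cardW: "real (card W) \<le> L / pi + 1"
      using card_W_bound[OF L0, of \<phi>] unfolding W_def by auto
    define low where "low f = ln (1 + A) + K0 + 2 * (\<Sum>m\<in>W. min 0 (ln \<bar>f - fm m\<bar>))" for f
    define F where "F = fm ` W"
    have finF: "finite F" unfolding F_def using finW by simp
    define low' where "low' f = (if f \<in> F then 0 else low f)" for f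
    have Inn: "I f \<ge> 0" for f
      unfolding I_def using integrand_nonneg(2)[OF A b, of "cos (\<phi> + c * f)"] by simp
    have pw: "low f \<le> I f" if f: "f \<in> {-Bw/2..Bw/2}" "f \<notin> F" for f
    proof -
      define x where "x = (\<phi> + c * f - pi) / (2 * pi)"
      define m where "m = \<lfloor>x + 1/2\<rfloor>"
      have m1: "of_int m \<le> x + 1/2" "x + 1/2 < of_int m + 1" unfolding m_def by linarith+
      have x2: "2 * pi * x = \<phi> + c * f - pi" unfolding x_def using pi_gt_zero by simp
      have "2 * pi * of_int m \<le> 2 * pi * (x + 1/2)" using m1(1) pi_gt_zero
        by (intro mult_left_mono) auto
      moreover have "2 * pi * (x + 1/2) < 2 * pi * (of_int m + 1)" using m1(2) pi_gt_zero
        by (intro mult_strict_left_mono) auto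
      ultimately have "2 * pi * of_int m \<le> 2 * pi * x + pi" "2 * pi * x - pi < 2 * pi * of_int m"
        by (simp_all add: distrib_left)
      then have v: "\<bar>\<phi> + c * f - pi - 2 * pi * of_int m\<bar> \<le> pi" using x2 by linarith
      have "\<bar>pi + 2 * pi * of_int m - \<phi>\<bar> \<le> \<bar>c * f\<bar> + pi" using v by linarith
      also have "\<bar>c * f\<bar> \<le> \<bar>c\<bar> * (Bw / 2)"
      proof -
        have "\<bar>f\<bar> \<le> Bw / 2" using f(1) by auto
        then show ?thesis unfolding abs_mult by (intro mult_left_mono) auto
      qed
      finally have mW: "m \<in> W" unfolding W_def L_def by simp
      have ne: "f \<noteq> fm m" using f(2) mW unfolding F_def by auto
      have "I f \<ge> ln (1 + A) + K0 + 2 * ln \<bar>f - fm m\<bar>"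
        using pointwise_lb[OF A b c v] ne unfolding I_def K0_def fm_def by simp
      moreover have "(\<Sum>m\<in>W. min 0 (ln \<bar>f - fm m\<bar>)) \<le> ln \<bar>f - fm m\<bar>"
      proof -
        have "(\<Sum>m\<in>W. min 0 (ln \<bar>f - fm m\<bar>)) = min 0 (ln \<bar>f - fm m\<bar>) + (\<Sum>m'\<in>W - {m}. min 0 (ln \<bar>f - fm m'\<bar>))"
          using finW mW by (simp add: sum.remove)
        also have "(\<Sum>m'\<in>W - {m}. min 0 (ln \<bar>f - fm m'\<bar>)) \<le> 0" by (intro sum_nonpos) auto
        finally show ?thesis by linarith
      qed
      ultimately show ?thesis unfolding low_def by linarith
    qed
    have pw': "low' f \<le> I f" if "f \<in> {-Bw/2..Bw/2}" for f
      using pw[OF that] Inn[of f] unfolding low'_def by auto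
    have hint: "(\<lambda>f. min 0 (ln \<bar>f - fm m\<bar>)) integrable_on {-Bw/2..Bw/2}"
      and hge: "integral {-Bw/2..Bw/2} (\<lambda>f. min 0 (ln \<bar>f - fm m\<bar>)) \<ge> -2" for m
      using h_integral_ge[of "-Bw/2" "Bw/2" "fm m"] Bw by auto
    have sint: "(\<lambda>f. \<Sum>m\<in>W. min 0 (ln \<bar>f - fm m\<bar>)) integrable_on {-Bw/2..Bw/2}"
      by (rule integrable_sum[OF finW hint])
    have lowint: "low integrable_on {-Bw/2..Bw/2}"
    proof -
      have "(\<lambda>x. 2 * (\<Sum>m\<in>W. min 0 (ln \<bar>x - fm m\<bar>))) integrable_on {-Bw/2..Bw/2}"
        using integrable_on_cmult_left[OF sint, of 2] by simp
      then show ?thesis unfolding low_def by (intro integrable_add integrable_const_ivl)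
    qed
    have s2: "(\<lambda>x. 2 * (\<Sum>m\<in>W. min 0 (ln \<bar>x - fm m\<bar>))) integrable_on {-Bw/2..Bw/2}"
      using integrable_on_cmult_left[OF sint, of 2] by simp
    have "integral {-Bw/2..Bw/2} low = integral {-Bw/2..Bw/2} (\<lambda>x. ln (1 + A) + K0) +
        integral {-Bw/2..Bw/2} (\<lambda>x. 2 * (\<Sum>m\<in>W. min 0 (ln \<bar>x - fm m\<bar>)))"
      unfolding low_def by (rule integral_add[OF integrable_const_ivl s2])
    also have "integral {-Bw/2..Bw/2} (\<lambda>x. ln (1 + A) + K0) = Bw * (ln (1 + A) + K0)" using Bw by simp
    also have "integral {-Bw/2..Bw/2} (\<lambda>x. 2 * (\<Sum>m\<in>W. min 0 (ln \<bar>x - fm m\<bar>))) =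
        2 * integral {-Bw/2..Bw/2} (\<lambda>x. (\<Sum>m\<in>W. min 0 (ln \<bar>x - fm m\<bar>)))"
      by (rule integral_mult_right)
    also have "integral {-Bw/2..Bw/2} (\<lambda>x. (\<Sum>m\<in>W. min 0 (ln \<bar>x - fm m\<bar>))) =
        (\<Sum>m\<in>W. integral {-Bw/2..Bw/2} (\<lambda>f. min 0 (ln \<bar>f - fm m\<bar>)))"
      by (rule integral_sum[OF finW hint])
    finally have "integral {-Bw/2..Bw/2} low =
        Bw * (ln (1 + A) + K0) + 2 * (\<Sum>m\<in>W. integral {-Bw/2..Bw/2} (\<lambda>f. min 0 (ln \<bar>f - fm m\<bar>)))" .
    moreover have "(\<Sum>m\<in>W. integral {-Bw/2..Bw/2} (\<lambda>f. min 0 (ln \<bar>f - fm m\<bar>))) \<ge> (\<Sum>m\<in>W. -2)"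
      by (intro sum_mono hge)
    ultimately have lowge: "integral {-Bw/2..Bw/2} low \<ge> Bw * (ln (1 + A) + K0) - 4 * real (card W)"
      by simp
    have low'int: "low' integrable_on {-Bw/2..Bw/2}"
      by (rule integrable_spike_finite[OF finF _ lowint]) (auto simp: low'_def)
    have "integral {-Bw/2..Bw/2} low' = integral {-Bw/2..Bw/2} low"
      by (rule integral_spike[OF negligible_finite[OF finF]]) (auto simp: low'_def)
    have Iint: "I integrable_on {-Bw/2..Bw/2}"
    proof (rule integrable_continuous_interval)
      have "1 + A * (1 + b\<^sup>2 + 2 * b * cos (\<phi> + c * f)) > 0" for f
        using integrand_nonneg(1)[OF A b, of "cos (\<phi> + c * f)"] A by (simp add: add_pos_nonneg)
      then show "continuous_on {-Bw/2..Bw/2} I" unfolding I_def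
        by (intro continuous_intros) (metis less_irrefl)
    qed
    have li: "integral {-Bw/2..Bw/2} low' \<le> integral {-Bw/2..Bw/2} I"
      by (rule integral_le[OF low'int Iint pw'])
    have bk: "Bw * K0 \<ge> - (Bw * \<bar>K0\<bar>)" using Bw
    proof -
      have "Bw * (- \<bar>K0\<bar>) \<le> Bw * K0" using Bw by (intro mult_left_mono) auto
      then show ?thesis by simp
    qed
    show "integral {-Bw/2..Bw/2} (\<lambda>f. ln (1 + A * (1 + b\<^sup>2 + 2 * b * cos (\<phi> + c * f)))) \<ge> Bw * ln (1 + A) - C"
    proof -
      have e: "integral {-Bw/2..Bw/2} (\<lambda>f. ln (1 + A * (1 + b\<^sup>2 + 2 * b * cos (\<phi> + c * f)))) = integral {-Bw/2..Bw/2} I"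
        by (rule arg_cong[where f="integral _"]) (simp add: I_def fun_eq_iff)
      have "4 * real (card W) \<le> 4 * (L/pi + 1)" using cardW by simp
      then show ?thesis unfolding e C_def
        using lowge \<open>integral {-Bw/2..Bw/2} low' = integral {-Bw/2..Bw/2} low\<close> li bk
        by (simp only: algebra_simps)
    qed
  qed
  then show ?thesis using C0 by blast
qed



lemma cmod_one_plus_rcis: "(cmod (1 + of_real B * cis \<psi>))\<^sup>2 = 1 + B\<^sup>2 + 2 * B * cos \<psi>"
proof -
  have "(cmod (1 + of_real B * cis \<psi>))\<^sup>2 = (1 + B * cos \<psi>)\<^sup>2 + (B * sin \<psi>)\<^sup>2"
    by (simp add: cmod_power2)
  also have "\<dots> = 1 + B\<^sup>2 + 2 * B * cos \<psi>"
  proof -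
    have e: "(B * sin \<psi>)\<^sup>2 = B\<^sup>2 - (B * cos \<psi>)\<^sup>2"
    proof -
      have h: "B\<^sup>2 * (sin \<psi>)\<^sup>2 + B\<^sup>2 * (cos \<psi>)\<^sup>2 = B\<^sup>2" by (simp add: distrib_left[symmetric])
      have "(B * sin \<psi>)\<^sup>2 = B\<^sup>2 * (sin \<psi>)\<^sup>2" "(B * cos \<psi>)\<^sup>2 = B\<^sup>2 * (cos \<psi>)\<^sup>2" by (simp_all add: power_mult_distrib)
      then show ?thesis using h by linarith
    qed
    show ?thesis unfolding e by (simp add: power2_eq_square algebra_simps)
  qed
  finally show ?thesis .
qed

lemma two_path_decomp:
  fixes u v :: complex and a b' :: real
  assumes u: "u \<noteq> 0"
  shows "(cmod (u * cis a + v * cis b'))\<^sup>2 =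
     (cmod u)\<^sup>2 * (1 + (cmod (v / u))\<^sup>2 + 2 * cmod (v / u) * cos (Arg (v / u) + (b' - a)))"
proof -
  define w where "w = v / u"
  have "u * cis a + v * cis b' = u * cis a * (1 + w * cis (b' - a))"
    using u unfolding w_def by (simp add: field_simps cis_divide[symmetric] cis_mult)
  also have "w * cis (b' - a) = of_real (cmod w) * cis (Arg w + (b' - a))"
  proof -
    have "w = of_real (cmod w) * cis (Arg w)" using rcis_cmod_Arg[of w] by (simp add: rcis_def)
    then have "w * cis (b' - a) = of_real (cmod w) * (cis (Arg w) * cis (b' - a))" by (metis mult.assoc)
    then show ?thesis by (simp add: cis_mult)
  qed
  finally have "cmod (u * cis a + v * cis b') = cmod u * cmod (1 + of_real (cmod w) * cis (Arg w + (b' - a)))"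
    by (simp add: norm_mult)
  then have "(cmod (u * cis a + v * cis b'))\<^sup>2 = (cmod u)\<^sup>2 * (cmod (1 + of_real (cmod w) * cis (Arg w + (b' - a))))\<^sup>2"
    by (simp add: power_mult_distrib)
  then show ?thesis unfolding w_def cmod_one_plus_rcis by simp
qed

lemma freq_lower:
  fixes Bw t1 t2 :: real
  assumes Bw: "Bw > 0" and t: "t1 \<noteq> t2"
  shows "\<exists>C\<ge>0. \<forall>\<rho> u v. \<rho> \<ge> 0 \<longrightarrow>
    integral {-Bw/2..Bw/2} (\<lambda>f. ln (1 + \<rho> * (cmod (u * cis (2 * pi * f * t1) + v * cis (2 * pi * f * t2)))\<^sup>2))
      \<ge> Bw * ln (1 + \<rho> * max ((cmod u)\<^sup>2) ((cmod v)\<^sup>2)) - C"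
proof -
  have c1: "2 * pi * (t2 - t1) \<noteq> 0" and c2: "2 * pi * (t1 - t2) \<noteq> 0" using t by auto
  obtain C1 where C1: "C1 \<ge> 0" "\<And>A \<phi> b. A \<ge> 0 \<Longrightarrow> 0 \<le> b \<Longrightarrow> b \<le> 1 \<Longrightarrow>
     integral {-Bw/2..Bw/2} (\<lambda>f. ln (1 + A * (1 + b\<^sup>2 + 2 * b * cos (\<phi> + (2 * pi * (t2 - t1)) * f)))) \<ge> Bw * ln (1 + A) - C1"
    using core_int[OF Bw c1] by blast
  obtain C2 where C2: "C2 \<ge> 0" "\<And>A \<phi> b. A \<ge> 0 \<Longrightarrow> 0 \<le> b \<Longrightarrow> b \<le> 1 \<Longrightarrow>
     integral {-Bw/2..Bw/2} (\<lambda>f. ln (1 + A * (1 + b\<^sup>2 + 2 * b * cos (\<phi> + (2 * pi * (t1 - t2)) * f)))) \<ge> Bw * ln (1 + A) - C2"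
    using core_int[OF Bw c2] by blast
  define C where "C = max C1 C2"
  have gen: "integral {-Bw/2..Bw/2} (\<lambda>f. ln (1 + \<rho> * (cmod (u * cis (2 * pi * f * s1) + v * cis (2 * pi * f * s2)))\<^sup>2))
      \<ge> Bw * ln (1 + \<rho> * (cmod u)\<^sup>2) - Cx"
    if \<rho>: "\<rho> \<ge> 0" and uv: "cmod v \<le> cmod u" and Cx: "Cx \<ge> 0"
      and H: "\<And>A \<phi> b. A \<ge> 0 \<Longrightarrow> 0 \<le> b \<Longrightarrow> b \<le> 1 \<Longrightarrow>
     integral {-Bw/2..Bw/2} (\<lambda>f. ln (1 + A * (1 + b\<^sup>2 + 2 * b * cos (\<phi> + (2 * pi * (s2 - s1)) * f)))) \<ge> Bw * ln (1 + A) - Cx"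
    for \<rho> u v s1 s2 Cx
  proof (cases "u = 0")
    case True
    then have "v = 0" using uv by simp
    then show ?thesis using True Cx by simp
  next
    case False
    define b where "b = cmod (v / u)"
    define \<phi> where "\<phi> = Arg (v / u)"
    have b: "0 \<le> b" "b \<le> 1" unfolding b_def using uv False by (auto simp: norm_divide divide_le_eq_1)
    have "(\<lambda>f. ln (1 + \<rho> * (cmod (u * cis (2 * pi * f * s1) + v * cis (2 * pi * f * s2)))\<^sup>2)) =
          (\<lambda>f. ln (1 + (\<rho> * (cmod u)\<^sup>2) * (1 + b\<^sup>2 + 2 * b * cos (\<phi> + (2 * pi * (s2 - s1)) * f))))"
    proof
      fix f
      have "2 * pi * f * s2 - 2 * pi * f * s1 = (2 * pi * (s2 - s1)) * f" by (simp add: algebra_simps)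
      then show "ln (1 + \<rho> * (cmod (u * cis (2 * pi * f * s1) + v * cis (2 * pi * f * s2)))\<^sup>2) =
          ln (1 + (\<rho> * (cmod u)\<^sup>2) * (1 + b\<^sup>2 + 2 * b * cos (\<phi> + (2 * pi * (s2 - s1)) * f)))"
        unfolding two_path_decomp[OF False] b_def \<phi>_def by (simp add: mult.assoc)
    qed
    then show ?thesis using H[of "\<rho> * (cmod u)\<^sup>2" b \<phi>] b \<rho> by simp
  qed
  have "\<forall>\<rho> u v. \<rho> \<ge> 0 \<longrightarrow>
    integral {-Bw/2..Bw/2} (\<lambda>f. ln (1 + \<rho> * (cmod (u * cis (2 * pi * f * t1) + v * cis (2 * pi * f * t2)))\<^sup>2))
      \<ge> Bw * ln (1 + \<rho> * max ((cmod u)\<^sup>2) ((cmod v)\<^sup>2)) - C"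
  proof (intro allI impI)
    fix \<rho> :: real and u v :: complex assume \<rho>: "\<rho> \<ge> 0"
    show "integral {-Bw/2..Bw/2} (\<lambda>f. ln (1 + \<rho> * (cmod (u * cis (2 * pi * f * t1) + v * cis (2 * pi * f * t2)))\<^sup>2))
      \<ge> Bw * ln (1 + \<rho> * max ((cmod u)\<^sup>2) ((cmod v)\<^sup>2)) - C"
    proof (cases "cmod v \<le> cmod u")
      case True
      have m: "max ((cmod u)\<^sup>2) ((cmod v)\<^sup>2) = (cmod u)\<^sup>2" using True by (simp add: max_def power_mono)
      have "C1 \<le> C" unfolding C_def by simp
      then show ?thesis using gen[OF \<rho> True C1(1) C1(2)] m by simp
    next
      case False
      then have uv: "cmod u \<le> cmod v" by simp
      have m: "max ((cmod u)\<^sup>2) ((cmod v)\<^sup>2) = (cmod v)\<^sup>2" using uv by (simp add: max_def power_mono)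
      have "C2 \<le> C" unfolding C_def by simp
      moreover have "(\<lambda>f. ln (1 + \<rho> * (cmod (u * cis (2 * pi * f * t1) + v * cis (2 * pi * f * t2)))\<^sup>2)) =
            (\<lambda>f. ln (1 + \<rho> * (cmod (v * cis (2 * pi * f * t2) + u * cis (2 * pi * f * t1)))\<^sup>2))"
        by (simp add: add.commute)
      ultimately show ?thesis using gen[OF \<rho> uv C2(1) C2(2)] m by simp
    qed
  qed
  moreover have "C \<ge> 0" unfolding C_def using C1 by simp
  ultimately show ?thesis by blast
qed



lemma box_measure:
  assumes "a \<ge> 0"
  shows "emeasure lborel (cbox (Complex (-a) (-a)) (Complex a a)) = ennreal ((2 * a)\<^sup>2)"
  using assms by (simp add: emeasure_lborel_cbox_eq Basis_complex_def power2_eq_square ennreal_mult)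

lemma dens_le: "s > 0 \<Longrightarrow> cgauss_density s z \<le> ennreal (1 / (pi * s))"
  unfolding cgauss_density_def by (intro ennreal_leI divide_right_mono) auto

lemma sets_disk[measurable]: "{z::complex. (cmod z)\<^sup>2 \<le> t} \<in> sets borel"
  by measurable

lemma gauss_upper:
  assumes M: "prob_space M" and X: "distributed M lborel X (cgauss_density s)"
    and s: "s > 0" and t: "t \<ge> 0"
  shows "measure M {\<omega> \<in> space M. (cmod (X \<omega>))\<^sup>2 \<le> t} \<le> 2 * t / s"
proof -
  interpret prob_space M by (rule M)
  define A where "A = {z::complex. (cmod z)\<^sup>2 \<le> t}"
  define a where "a = sqrt t"
  define B where "B = cbox (Complex (-a) (-a)) (Complex a a)"
  have Aset: "A \<in> sets lborel" unfolding A_def by simp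
  have eq: "{\<omega> \<in> space M. (cmod (X \<omega>))\<^sup>2 \<le> t} = X -` A \<inter> space M" unfolding A_def by auto
  have "emeasure M (X -` A \<inter> space M) = (\<integral>\<^sup>+x. cgauss_density s x * indicator A x \<partial>lborel)"
    by (rule distributed_emeasure[OF X Aset])
  also have "\<dots> \<le> (\<integral>\<^sup>+x. ennreal (1 / (pi * s)) * indicator B x \<partial>lborel)"
  proof (rule nn_integral_mono)
    fix z
    have "z \<in> A \<Longrightarrow> z \<in> B"
    proof -
      assume "z \<in> A"
      then have "(cmod z)\<^sup>2 \<le> t" unfolding A_def by simp
      then have c: "cmod z \<le> a" unfolding a_def using real_le_rsqrt by auto
      have "\<bar>Re z\<bar> \<le> a" "\<bar>Im z\<bar> \<le> a" using abs_Re_le_cmod[of z] abs_Im_le_cmod[of z] c by linarith+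
      then show "z \<in> B" unfolding B_def by (auto simp: cbox_def Basis_complex_def)
    qed
    then show "cgauss_density s z * indicator A z \<le> ennreal (1 / (pi * s)) * indicator B z"
      using dens_le[OF s, of z] by (auto simp: indicator_def)
  qed
  also have "\<dots> = ennreal (1 / (pi * s)) * emeasure lborel B"
    by (rule nn_integral_cmult_indicator) (simp add: B_def)
  also have "\<dots> = ennreal (1 / (pi * s)) * ennreal ((2 * a)\<^sup>2)"
    unfolding B_def using t by (simp only: box_measure a_def real_sqrt_ge_zero)
  also have "\<dots> = ennreal (1 / (pi * s) * (2 * a)\<^sup>2)"
    using s by (intro ennreal_mult[symmetric]) auto
  also have "1 / (pi * s) * (2 * a)\<^sup>2 = 4 * t / (pi * s)" unfolding a_def using t by (simp add: power2_eq_square)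
  finally have "ennreal (measure M (X -` A \<inter> space M)) \<le> ennreal (4 * t / (pi * s))"
    by (simp add: emeasure_eq_measure)
  then have "measure M (X -` A \<inter> space M) \<le> 4 * t / (pi * s)"
    using s t by (simp add: ennreal_le_iff)
  also have "4 * t / (pi * s) \<le> 2 * t / s"
  proof -
    have "4 * t / (pi * s) = (4 / pi) * (t / s)" by simp
    also have "\<dots> \<le> 2 * (t / s)" using pi_gt3 s t by (intro mult_right_mono) (auto simp: divide_le_eq)
    finally show ?thesis by simp
  qed
  finally show ?thesis unfolding eq .
qed



lemma gauss_lower:
  assumes M: "prob_space M" and X: "distributed M lborel X (cgauss_density s)"
    and s: "s > 0" and t: "t \<ge> 0" "t \<le> s"
  shows "measure M {\<omega> \<in> space M. (cmod (X \<omega>))\<^sup>2 \<le> t} \<ge> t / (6 * s)"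
proof -
  interpret prob_space M by (rule M)
  define A where "A = {z::complex. (cmod z)\<^sup>2 \<le> t}"
  define a where "a = sqrt (t / 2)"
  define B where "B = cbox (Complex (-a) (-a)) (Complex a a)"
  define c where "c = exp (-1) / (pi * s)"
  have a0: "a \<ge> 0" unfolding a_def using t by simp
  have aa: "a\<^sup>2 = t / 2" unfolding a_def using t by simp
  have Aset: "A \<in> sets lborel" unfolding A_def by simp
  have eq: "{\<omega> \<in> space M. (cmod (X \<omega>))\<^sup>2 \<le> t} = X -` A \<inter> space M" unfolding A_def by auto
  have "ennreal c * emeasure lborel B = (\<integral>\<^sup>+x. ennreal c * indicator B x \<partial>lborel)"
    by (rule nn_integral_cmult_indicator[symmetric]) (simp add: B_def)
  also have "\<dots> \<le> (\<integral>\<^sup>+x. cgauss_density s x * indicator A x \<partial>lborel)"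
  proof (rule nn_integral_mono)
    fix z
    show "ennreal c * indicator B z \<le> cgauss_density s z * indicator A z"
    proof (cases "z \<in> B")
      case True
      then have "\<bar>Re z\<bar> \<le> a" "\<bar>Im z\<bar> \<le> a" unfolding B_def by (auto simp: cbox_def Basis_complex_def)
      then have "\<bar>Re z\<bar>\<^sup>2 \<le> a\<^sup>2" "\<bar>Im z\<bar>\<^sup>2 \<le> a\<^sup>2" by (meson abs_ge_zero power_mono)+
      then have "(Re z)\<^sup>2 \<le> a\<^sup>2" "(Im z)\<^sup>2 \<le> a\<^sup>2" by simp_all
      then have cz: "(cmod z)\<^sup>2 \<le> t" using aa by (simp add: cmod_power2)
      then have zA: "z \<in> A" unfolding A_def by simp
      have "- 1 \<le> - (cmod z)\<^sup>2 / s" using cz t s by (simp add: divide_le_eq)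
      then have "exp (-1) \<le> exp (- (cmod z)\<^sup>2 / s)" by simp
      then have "c \<le> exp (- (cmod z)\<^sup>2 / s) / (pi * s)" unfolding c_def using s by (intro divide_right_mono) auto
      then show ?thesis using True zA unfolding cgauss_density_def by (simp add: ennreal_leI)
    qed (simp)
  qed
  also have "\<dots> = emeasure M (X -` A \<inter> space M)"
    by (rule distributed_emeasure[OF X Aset, symmetric])
  finally have "ennreal c * ennreal ((2 * a)\<^sup>2) \<le> ennreal (measure M (X -` A \<inter> space M))"
    unfolding B_def box_measure[OF a0] by (simp add: emeasure_eq_measure)
  moreover have "ennreal c * ennreal ((2 * a)\<^sup>2) = ennreal (c * (2 * a)\<^sup>2)"
    using s by (intro ennreal_mult[symmetric]) (auto simp: c_def)
  ultimately have "c * (2 * a)\<^sup>2 \<le> measure M (X -` A \<inter> space M)" by (simp add: ennreal_le_iff)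
  moreover have "c * (2 * a)\<^sup>2 = exp (-1) * 2 * t / (pi * s)" unfolding c_def
    by (simp add: power_mult_distrib aa)
  moreover have "t / (6 * s) \<le> exp (-1) * 2 * t / (pi * s)"
  proof -
    have e1: "exp (1::real) * exp (-1) = 1" by (simp flip: exp_add)
    have "exp (1::real) * exp (-1) \<le> 3 * exp (-1)" by (rule mult_right_mono[OF exp_le]) simp
    then have e: "exp (-1) \<ge> (1::real) / 3" using e1 by simp
    have "t / (6 * s) = (1/3) * 2 * t / (4 * s)" by simp
    also have "\<dots> \<le> exp (-1) * 2 * t / (4 * s)" using e t s by (intro divide_right_mono mult_right_mono) auto
    also have "\<dots> \<le> exp (-1) * 2 * t / (pi * s)" using pi_less_4 s t
      by (intro divide_left_mono mult_right_mono) auto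
    finally show ?thesis .
  qed
  ultimately show ?thesis unfolding eq by linarith
qed

lemma gauss_tail:
  assumes M: "prob_space M" and X: "distributed M lborel X (cgauss_density s)"
    and s: "s > 0" and t: "t \<ge> 0"
  shows "measure M {\<omega> \<in> space M. (cmod (X \<omega>))\<^sup>2 \<ge> t} \<ge> 1 - 2 * t / s"
proof -
  interpret prob_space M by (rule M)
  have Xm: "X \<in> measurable M borel" using distributed_measurable[OF X] by simp
  have ev: "{\<omega> \<in> space M. (cmod (X \<omega>))\<^sup>2 < t} \<in> sets M" using Xm by measurable
  have "{\<omega> \<in> space M. (cmod (X \<omega>))\<^sup>2 \<ge> t} = space M - {\<omega> \<in> space M. (cmod (X \<omega>))\<^sup>2 < t}" by auto
  then have "prob {\<omega> \<in> space M. (cmod (X \<omega>))\<^sup>2 \<ge> t} = 1 - prob {\<omega> \<in> space M. (cmod (X \<omega>))\<^sup>2 < t}"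
    using prob_compl[OF ev] by simp
  moreover have "prob {\<omega> \<in> space M. (cmod (X \<omega>))\<^sup>2 < t} \<le> prob {\<omega> \<in> space M. (cmod (X \<omega>))\<^sup>2 \<le> t}"
    using Xm by (intro finite_measure_mono) auto
  moreover have "prob {\<omega> \<in> space M. (cmod (X \<omega>))\<^sup>2 \<le> t} \<le> 2 * t / s" by (rule gauss_upper[OF M X s t])
  ultimately show ?thesis by linarith
qed



lemma indep_gen:
  fixes M :: "'a measure" and \<alpha> :: "node \<Rightarrow> node \<Rightarrow> 'a \<Rightarrow> complex"
  assumes M: "prob_space M"
    and indep: "prob_space.indep_vars M (\<lambda>_. borel) (\<lambda>l. \<alpha> (fst l) (snd l)) links"
    and J: "J \<subseteq> links" "J \<noteq> {}" "finite J" and A: "\<And>l. l \<in> J \<Longrightarrow> A l \<in> sets borel"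
  shows "measure M {\<omega> \<in> space M. \<forall>l\<in>J. \<alpha> (fst l) (snd l) \<omega> \<in> A l} =
         (\<Prod>l\<in>J. measure M {\<omega> \<in> space M. \<alpha> (fst l) (snd l) \<omega> \<in> A l})"
proof -
  interpret prob_space M by (rule M)
  have "measure M (\<Inter>l\<in>J. (\<lambda>l. \<alpha> (fst l) (snd l)) l -` A l \<inter> space M) =
        (\<Prod>l\<in>J. measure M ((\<lambda>l. \<alpha> (fst l) (snd l)) l -` A l \<inter> space M))"
    by (rule indep_varsD[OF indep J(2,3,1)]) (use A in simp)
  moreover have "(\<Inter>l\<in>J. (\<lambda>l. \<alpha> (fst l) (snd l)) l -` A l \<inter> space M) = {\<omega> \<in> space M. \<forall>l\<in>J. \<alpha> (fst l) (snd l) \<omega> \<in> A l}"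
    using J(2) by auto
  moreover have "\<And>l. (\<lambda>l. \<alpha> (fst l) (snd l)) l -` A l \<inter> space M = {\<omega> \<in> space M. \<alpha> (fst l) (snd l) \<omega> \<in> A l}"
    by auto
  ultimately show ?thesis by simp
qed

lemma indep3:
  fixes M :: "'a measure" and \<alpha> :: "node \<Rightarrow> node \<Rightarrow> 'a \<Rightarrow> complex"
  assumes M: "prob_space M"
    and indep: "prob_space.indep_vars M (\<lambda>_. borel) (\<lambda>l. \<alpha> (fst l) (snd l)) links"
    and A: "A0 \<in> sets borel" "A1 \<in> sets borel" "A2 \<in> sets borel"
  shows "measure M {\<omega> \<in> space M. \<alpha> S D \<omega> \<in> A0 \<and> \<alpha> R1 D \<omega> \<in> A1 \<and> \<alpha> R2 D \<omega> \<in> A2} =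
     measure M {\<omega> \<in> space M. \<alpha> S D \<omega> \<in> A0} * measure M {\<omega> \<in> space M. \<alpha> R1 D \<omega> \<in> A1} *
     measure M {\<omega> \<in> space M. \<alpha> R2 D \<omega> \<in> A2}"
proof -
  define J where "J = {(S, D), (R1, D), (R2, D)}"
  define AA where "AA l = (if l = (S, D) then A0 else if l = (R1, D) then A1 else A2)" for l
  have J: "J \<subseteq> links" "J \<noteq> {}" "finite J" unfolding J_def links_def by auto
  have "measure M {\<omega> \<in> space M. \<forall>l\<in>J. \<alpha> (fst l) (snd l) \<omega> \<in> AA l} =
         (\<Prod>l\<in>J. measure M {\<omega> \<in> space M. \<alpha> (fst l) (snd l) \<omega> \<in> AA l})"
    by (rule indep_gen[OF M indep J]) (use A in \<open>auto simp: AA_def J_def\<close>)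
  then show ?thesis unfolding J_def AA_def by (simp add: conj_commute mult.assoc)
qed

lemma indep5:
  fixes M :: "'a measure" and \<alpha> :: "node \<Rightarrow> node \<Rightarrow> 'a \<Rightarrow> complex"
  assumes M: "prob_space M"
    and indep: "prob_space.indep_vars M (\<lambda>_. borel) (\<lambda>l. \<alpha> (fst l) (snd l)) links"
    and A: "A0 \<in> sets borel" "A1 \<in> sets borel" "A2 \<in> sets borel" "B1 \<in> sets borel" "B2 \<in> sets borel"
  shows "measure M {\<omega> \<in> space M. \<alpha> S D \<omega> \<in> A0 \<and> \<alpha> R1 D \<omega> \<in> A1 \<and> \<alpha> R2 D \<omega> \<in> A2
                                    \<and> \<alpha> S R1 \<omega> \<in> B1 \<and> \<alpha> S R2 \<omega> \<in> B2} =
     measure M {\<omega> \<in> space M. \<alpha> S D \<omega> \<in> A0} * measure M {\<omega> \<in> space M. \<alpha> R1 D \<omega> \<in> A1} *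
     measure M {\<omega> \<in> space M. \<alpha> R2 D \<omega> \<in> A2} * measure M {\<omega> \<in> space M. \<alpha> S R1 \<omega> \<in> B1} *
     measure M {\<omega> \<in> space M. \<alpha> S R2 \<omega> \<in> B2}"
proof -
  define J where "J = {(S, D), (R1, D), (R2, D), (S, R1), (S, R2)}"
  define AA where "AA l = (if l = (S, D) then A0 else if l = (R1, D) then A1 else if l = (R2, D) then A2
     else if l = (S, R1) then B1 else B2)" for l
  have J: "J \<subseteq> links" "J \<noteq> {}" "finite J" unfolding J_def links_def by auto
  have "measure M {\<omega> \<in> space M. \<forall>l\<in>J. \<alpha> (fst l) (snd l) \<omega> \<in> AA l} =
         (\<Prod>l\<in>J. measure M {\<omega> \<in> space M. \<alpha> (fst l) (snd l) \<omega> \<in> AA l})"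
    by (rule indep_gen[OF M indep J]) (use A in \<open>auto simp: AA_def J_def\<close>)
  then show ?thesis unfolding J_def AA_def by (simp add: conj_commute mult.assoc)
qed



definition Jint :: "real \<Rightarrow> real \<Rightarrow> (node \<Rightarrow> real) \<Rightarrow> complex \<Rightarrow> complex \<Rightarrow> real" where
  "Jint \<rho> Bw tau u v = integral {-Bw/2..Bw/2}
     (\<lambda>f. ln (1 + \<rho> * (cmod (u * cis (2 * pi * f * tau R1) + v * cis (2 * pi * f * tau R2)))\<^sup>2))"

lemma ITDA2: "I_TDA snr Bw tau {R1, R2} a0 g =
   ln (1 + rho0 snr * (cmod a0)\<^sup>2) / 2 + Jint (rho0 snr) Bw tau (g R1) (g R2) / (2 * Bw)"
  unfolding I_TDA_def Jint_def by simp

lemma card_decoding_set: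
  "card (decoding_set snr R h) = 2 \<longleftrightarrow> decodes snr R (h R1) \<and> decodes snr R (h R2)"
proof -
  consider "decodes snr R (h R1)" "decodes snr R (h R2)" | "decodes snr R (h R1)" "\<not> decodes snr R (h R2)"
    | "\<not> decodes snr R (h R1)" "decodes snr R (h R2)" | "\<not> decodes snr R (h R1)" "\<not> decodes snr R (h R2)"
    by blast
  then show ?thesis
  proof cases
    case 1
    then have "decoding_set snr R h = {R1, R2}" unfolding decoding_set_def by auto
    then show ?thesis using 1 by simp
  next
    case 2
    then have "decoding_set snr R h = {R1}" unfolding decoding_set_def by auto
    then show ?thesis using 2 by simp
  next
    case 3
    then have "decoding_set snr R h = {R2}" unfolding decoding_set_def by auto
    then show ?thesis using 3 by simp
  next
    case 4
    then have "decoding_set snr R h = {}" unfolding decoding_set_def by auto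
    then show ?thesis using 4 by simp
  qed
qed

lemma decoding_set_both:
  "decodes snr R (h R1) \<Longrightarrow> decodes snr R (h R2) \<Longrightarrow> decoding_set snr R h = {R1, R2}"
  unfolding decoding_set_def by auto

lemma outage_eq:
  "outage_prob M \<alpha> \<sigma>2 r Bw tau snr =
    measure M {\<omega> \<in> space M.
      ln (1 + rho0 snr * (cmod (\<alpha> S D \<omega>))\<^sup>2) / 2 + Jint (rho0 snr) Bw tau (\<alpha> R1 D \<omega>) (\<alpha> R2 D \<omega>) / (2 * Bw)
         < rate r (\<sigma>2 S D) snr
      \<and> decodes snr (rate r (\<sigma>2 S D) snr) (\<alpha> S R1 \<omega>) \<and> decodes snr (rate r (\<sigma>2 S D) snr) (\<alpha> S R2 \<omega>)}"
  unfolding outage_prob_def Let_def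
  by (rule arg_cong[where f="measure M"])
     (auto simp: card_decoding_set decoding_set_both ITDA2 simp del: One_nat_def)

lemma Jint_cont:
  assumes "\<rho> \<ge> 0"
  shows "continuous_on UNIV (\<lambda>p. Jint \<rho> Bw tau (fst p) (snd p))"
proof -
  have "continuous_on UNIV (\<lambda>p. integral (cbox (-Bw/2) (Bw/2))
     (\<lambda>f. ln (1 + \<rho> * (cmod (fst p * cis (2 * pi * f * tau R1) + snd p * cis (2 * pi * f * tau R2)))\<^sup>2)))"
  proof (rule integral_continuous_on_param)
    have "1 + \<rho> * (cmod (fst (fst q) * cis (2 * pi * snd q * tau R1) + snd (fst q) * cis (2 * pi * snd q * tau R2)))\<^sup>2 > 0"
      for q :: "(complex \<times> complex) \<times> real"
      using assms by (simp add: add_pos_nonneg)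
    then show "continuous_on (UNIV \<times> cbox (-Bw/2) (Bw/2)) (\<lambda>(p, f).
       ln (1 + \<rho> * (cmod (fst p * cis (2 * pi * f * tau R1) + snd p * cis (2 * pi * f * tau R2)))\<^sup>2))"
      unfolding case_prod_beta by (intro continuous_intros) (metis less_irrefl)
  qed
  then show ?thesis unfolding Jint_def cbox_interval by simp
qed

lemma decodes_meas: "{z. decodes snr R z} \<in> sets borel"
  unfolding decodes_def by measurable



lemma outage_set_meas:
  fixes M :: "'a measure" and \<alpha> :: "node \<Rightarrow> node \<Rightarrow> 'a \<Rightarrow> complex"
  assumes distr: "\<And>i j. (i, j) \<in> links \<Longrightarrow> distributed M lborel (\<alpha> i j) (cgauss_density (\<sigma>2 i j))"
    and \<rho>: "\<rho> \<ge> 0"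
  shows "{\<omega> \<in> space M.
      ln (1 + \<rho> * (cmod (\<alpha> S D \<omega>))\<^sup>2) / 2 + Jint \<rho> Bw tau (\<alpha> R1 D \<omega>) (\<alpha> R2 D \<omega>) / (2 * Bw) < R
      \<and> decodes snr R (\<alpha> S R1 \<omega>) \<and> decodes snr R (\<alpha> S R2 \<omega>)} \<in> sets M"
proof -
  have m: "\<alpha> i j \<in> borel_measurable M" if "(i, j) \<in> links" for i j
    using distributed_measurable[OF distr[OF that]] by simp
  have [measurable]: "\<alpha> S D \<in> borel_measurable M" "\<alpha> R1 D \<in> borel_measurable M" "\<alpha> R2 D \<in> borel_measurable M"
     "\<alpha> S R1 \<in> borel_measurable M" "\<alpha> S R2 \<in> borel_measurable M"
    by (auto intro!: m simp: links_def)
  have [measurable]: "(\<lambda>\<omega>. Jint \<rho> Bw tau (\<alpha> R1 D \<omega>) (\<alpha> R2 D \<omega>)) \<in> borel_measurable M"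
    by (rule borel_measurable_continuous_Pair[OF _ _ Jint_cont[OF \<rho>]]) measurable
  show ?thesis unfolding decodes_def by measurable
qed



lemma Jint_upper:
  assumes \<rho>: "\<rho> \<ge> 0" and Bw: "Bw > 0"
  shows "Jint \<rho> Bw tau u v \<le> Bw * ln (1 + \<rho> * (cmod u + cmod v)\<^sup>2)"
proof -
  define h where "h f = ln (1 + \<rho> * (cmod (u * cis (2 * pi * f * tau R1) + v * cis (2 * pi * f * tau R2)))\<^sup>2)" for f
  have hint: "h integrable_on {-Bw/2..Bw/2}"
  proof (rule integrable_continuous_interval)
    have "1 + \<rho> * (cmod (u * cis (2 * pi * f * tau R1) + v * cis (2 * pi * f * tau R2)))\<^sup>2 > 0" for f
      using \<rho> by (simp add: add_pos_nonneg)
    then show "continuous_on {-Bw/2..Bw/2} h" unfolding h_def by (intro continuous_intros) (metis less_irrefl)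
  qed
  have "h f \<le> ln (1 + \<rho> * (cmod u + cmod v)\<^sup>2)" for f
  proof -
    have "cmod (u * cis (2 * pi * f * tau R1) + v * cis (2 * pi * f * tau R2)) \<le> cmod u + cmod v"
      using norm_triangle_ineq[of "u * cis (2 * pi * f * tau R1)" "v * cis (2 * pi * f * tau R2)"]
      by (simp add: norm_mult)
    then have "(cmod (u * cis (2 * pi * f * tau R1) + v * cis (2 * pi * f * tau R2)))\<^sup>2 \<le> (cmod u + cmod v)\<^sup>2"
      by (intro power_mono) auto
    then have "\<rho> * (cmod (u * cis (2 * pi * f * tau R1) + v * cis (2 * pi * f * tau R2)))\<^sup>2 \<le> \<rho> * (cmod u + cmod v)\<^sup>2"
      using \<rho> by (intro mult_left_mono) auto
    then show ?thesis unfolding h_def using \<rho> by (intro ln_mono) (auto simp: add_pos_nonneg)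
  qed
  then have "integral {-Bw/2..Bw/2} h \<le> integral {-Bw/2..Bw/2} (\<lambda>f. ln (1 + \<rho> * (cmod u + cmod v)\<^sup>2))"
    by (intro integral_le hint integrable_const_ivl) auto
  also have "\<dots> = Bw * ln (1 + \<rho> * (cmod u + cmod v)\<^sup>2)" using Bw by simp
  finally show ?thesis unfolding Jint_def h_def by simp
qed

lemma sets_disk2[measurable]: "{z::complex. (cmod z)\<^sup>2 \<ge> t} \<in> sets borel"
  by measurable

lemma lower_bound_fixed:
  fixes M :: "'a measure" and \<alpha> :: "node \<Rightarrow> node \<Rightarrow> 'a \<Rightarrow> complex"
  assumes M: "prob_space M"
    and indep: "prob_space.indep_vars M (\<lambda>_. borel) (\<lambda>l. \<alpha> (fst l) (snd l)) links"
    and distr: "\<And>i j. (i, j) \<in> links \<Longrightarrow> distributed M lborel (\<alpha> i j) (cgauss_density (\<sigma>2 i j))"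
    and var_pos: "\<And>i j. (i, j) \<in> links \<Longrightarrow> \<sigma>2 i j > 0"
    and r: "0 < r" and Bw: "Bw > 0" and snr: "snr > 0"
    and Q4: "exp (2 * rate r (\<sigma>2 S D) snr) > 4"
    and c0: "1 / rho0 snr \<le> \<sigma>2 S D"
    and c1: "exp (2 * rate r (\<sigma>2 S D) snr) / (16 * rho0 snr) \<le> \<sigma>2 R1 D"
    and c2: "exp (2 * rate r (\<sigma>2 S D) snr) / (16 * rho0 snr) \<le> \<sigma>2 R2 D"
    and c3: "exp (2 * rate r (\<sigma>2 S D) snr) / rho0 snr \<le> \<sigma>2 S R1 / 4"
    and c4: "exp (2 * rate r (\<sigma>2 S D) snr) / rho0 snr \<le> \<sigma>2 S R2 / 4"
  shows "outage_prob M \<alpha> \<sigma>2 r Bw tau snr \<ge>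
     (exp (2 * rate r (\<sigma>2 S D) snr))\<^sup>2 / (221184 * (rho0 snr)^3 * \<sigma>2 S D * \<sigma>2 R1 D * \<sigma>2 R2 D)"
proof -
  interpret prob_space M by (rule M)
  define \<rho> where "\<rho> = rho0 snr"
  define R where "R = rate r (\<sigma>2 S D) snr"
  define Q where "Q = exp (2 * R)"
  have \<rho>0: "\<rho> > 0" unfolding \<rho>_def rho0_def using snr by simp
  have s: "\<sigma>2 S D > 0" "\<sigma>2 R1 D > 0" "\<sigma>2 R2 D > 0" "\<sigma>2 S R1 > 0" "\<sigma>2 S R2 > 0"
    by (auto intro!: var_pos simp: links_def)
  have d: "distributed M lborel (\<alpha> S D) (cgauss_density (\<sigma>2 S D))"
    "distributed M lborel (\<alpha> R1 D) (cgauss_density (\<sigma>2 R1 D))"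
    "distributed M lborel (\<alpha> R2 D) (cgauss_density (\<sigma>2 R2 D))"
    "distributed M lborel (\<alpha> S R1) (cgauss_density (\<sigma>2 S R1))"
    "distributed M lborel (\<alpha> S R2) (cgauss_density (\<sigma>2 S R2))"
    by (auto intro!: distr simp: links_def)
  have R0: "R \<ge> 0" unfolding R_def rate_def using r snr s(1) by simp
  have Q1: "Q \<ge> 1" unfolding Q_def using R0 by simp
  have Q4': "Q > 4" using Q4 unfolding Q_def R_def .
  define t0 where "t0 = 1 / \<rho>"
  define t1 where "t1 = Q / (16 * \<rho>)"
  define T where "T = (Q - 1) / \<rho>"
  define A0 where "A0 = {z::complex. (cmod z)\<^sup>2 \<le> t0}"
  define A1 where "A1 = {z::complex. (cmod z)\<^sup>2 \<le> t1}"
  define B where "B = {z::complex. (cmod z)\<^sup>2 \<ge> T}"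
  define E0 where "E0 = {\<omega> \<in> space M. \<alpha> S D \<omega> \<in> A0 \<and> \<alpha> R1 D \<omega> \<in> A1 \<and> \<alpha> R2 D \<omega> \<in> A1
                                    \<and> \<alpha> S R1 \<omega> \<in> B \<and> \<alpha> S R2 \<omega> \<in> B}"
  define Out where "Out = {\<omega> \<in> space M.
      ln (1 + \<rho> * (cmod (\<alpha> S D \<omega>))\<^sup>2) / 2 + Jint \<rho> Bw tau (\<alpha> R1 D \<omega>) (\<alpha> R2 D \<omega>) / (2 * Bw) < R
      \<and> decodes snr R (\<alpha> S R1 \<omega>) \<and> decodes snr R (\<alpha> S R2 \<omega>)}"
  have P: "outage_prob M \<alpha> \<sigma>2 r Bw tau snr = measure M Out"
    unfolding outage_eq Out_def \<rho>_def R_def ..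
  have Outm: "Out \<in> sets M" unfolding Out_def by (rule outage_set_meas[OF distr less_imp_le[OF \<rho>0]])
  have dec: "decodes snr R h" if "h \<in> B" for h
  proof -
    have "(cmod h)\<^sup>2 \<ge> (Q - 1) / \<rho>" using that unfolding B_def T_def by simp
    then have "\<rho> * (cmod h)\<^sup>2 \<ge> Q - 1" using \<rho>0 by (simp add: divide_le_eq mult.commute)
    then have "ln (1 + \<rho> * (cmod h)\<^sup>2) \<ge> ln Q" using Q1 by (intro ln_mono) auto
    then show ?thesis unfolding decodes_def Q_def \<rho>_def[symmetric] by simp
  qed
  have sub: "E0 \<subseteq> Out"
  proof
    fix \<omega> assume \<omega>: "\<omega> \<in> E0"
    define a0 where "a0 = \<alpha> S D \<omega>"
    define a1 where "a1 = \<alpha> R1 D \<omega>"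
    define a2 where "a2 = \<alpha> R2 D \<omega>"
    have h0: "(cmod a0)\<^sup>2 \<le> 1 / \<rho>" and h1: "(cmod a1)\<^sup>2 \<le> t1" and h2: "(cmod a2)\<^sup>2 \<le> t1"
      using \<omega> unfolding E0_def A0_def A1_def t0_def a0_def a1_def a2_def by auto
    have "\<rho> * (cmod a0)\<^sup>2 \<le> 1" using h0 \<rho>0 by (simp add: le_divide_eq mult.commute)
    then have l0: "ln (1 + \<rho> * (cmod a0)\<^sup>2) \<le> ln 2" using \<rho>0 by (intro ln_mono) (auto intro!: add_pos_nonneg)
    have "(cmod a1 + cmod a2)\<^sup>2 \<le> 2 * ((cmod a1)\<^sup>2 + (cmod a2)\<^sup>2)"
    proof -
      have d: "0 \<le> (cmod a1 - cmod a2)\<^sup>2" by simp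
      then show ?thesis unfolding power2_sum power2_diff mult.assoc by (simp add: algebra_simps)
    qed
    also have "\<dots> \<le> 4 * t1" using h1 h2 by simp
    finally have "\<rho> * (cmod a1 + cmod a2)\<^sup>2 \<le> \<rho> * (4 * t1)" using \<rho>0 by (intro mult_left_mono) auto
    also have "\<rho> * (4 * t1) = Q / 4" unfolding t1_def using \<rho>0 by simp
    finally have "ln (1 + \<rho> * (cmod a1 + cmod a2)\<^sup>2) \<le> ln (1 + Q / 4)" using \<rho>0 by (intro ln_mono) (auto intro!: add_pos_nonneg)
    moreover have "Jint \<rho> Bw tau a1 a2 \<le> Bw * ln (1 + \<rho> * (cmod a1 + cmod a2)\<^sup>2)"
      by (rule Jint_upper[OF less_imp_le[OF \<rho>0] Bw])
    ultimately have "Jint \<rho> Bw tau a1 a2 \<le> Bw * ln (1 + Q / 4)"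
      using Bw by (meson mult_left_mono less_imp_le order_trans)
    then have "Jint \<rho> Bw tau a1 a2 / (2 * Bw) \<le> Bw * ln (1 + Q / 4) / (2 * Bw)"
      using Bw by (intro divide_right_mono) auto
    then have "Jint \<rho> Bw tau a1 a2 / (2 * Bw) \<le> ln (1 + Q / 4) / 2" using Bw by simp
    moreover have "ln 2 + ln (1 + Q / 4) < ln Q"
    proof -
      have "ln 2 + ln (1 + Q / 4) = ln (2 * (1 + Q / 4))" using Q1 by (intro ln_mult_pos[symmetric]) auto
      also have "\<dots> < ln Q" using Q4' by (intro ln_less_cancel_iff[THEN iffD2]) auto
      finally show ?thesis .
    qed
    moreover have "ln Q = 2 * R" unfolding Q_def by simp
    ultimately have "ln (1 + \<rho> * (cmod a0)\<^sup>2) / 2 + Jint \<rho> Bw tau a1 a2 / (2 * Bw) < R" using l0 by linarith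
    moreover have "decodes snr R (\<alpha> S R1 \<omega>)" "decodes snr R (\<alpha> S R2 \<omega>)" using \<omega> dec unfolding E0_def by auto
    ultimately show "\<omega> \<in> Out" using \<omega> unfolding Out_def E0_def a0_def a1_def a2_def by auto
  qed
  have mE0: "measure M E0 =
     measure M {\<omega> \<in> space M. \<alpha> S D \<omega> \<in> A0} * measure M {\<omega> \<in> space M. \<alpha> R1 D \<omega> \<in> A1} *
     measure M {\<omega> \<in> space M. \<alpha> R2 D \<omega> \<in> A1} * measure M {\<omega> \<in> space M. \<alpha> S R1 \<omega> \<in> B} *
     measure M {\<omega> \<in> space M. \<alpha> S R2 \<omega> \<in> B}"
    unfolding E0_def by (rule indep5[OF M indep]) (simp_all add: A0_def A1_def B_def)
  have T0: "T \<ge> 0" unfolding T_def using Q1 \<rho>0 by simp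
  have Tle: "2 * T / \<sigma>2 S R1 \<le> 1/2" "2 * T / \<sigma>2 S R2 \<le> 1/2"
  proof -
    have "T \<le> Q / \<rho>" unfolding T_def using \<rho>0 by (simp add: divide_right_mono)
    then have "T \<le> \<sigma>2 S R1 / 4" "T \<le> \<sigma>2 S R2 / 4" using c3 c4 unfolding Q_def R_def \<rho>_def by linarith+
    then show "2 * T / \<sigma>2 S R1 \<le> 1/2" "2 * T / \<sigma>2 S R2 \<le> 1/2" using s by (simp_all add: divide_le_eq)
  qed
  have t0: "0 \<le> t0" "t0 \<le> \<sigma>2 S D" unfolding t0_def using \<rho>0 c0 unfolding \<rho>_def by auto
  have t1: "0 \<le> t1" "t1 \<le> \<sigma>2 R1 D" "t1 \<le> \<sigma>2 R2 D" unfolding t1_def using \<rho>0 Q1 c1 c2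
    unfolding \<rho>_def Q_def R_def by auto
  have p0: "measure M {\<omega> \<in> space M. \<alpha> S D \<omega> \<in> A0} \<ge> t0 / (6 * \<sigma>2 S D)"
    unfolding A0_def using gauss_lower[OF M d(1) s(1) t0] by simp
  have p1: "measure M {\<omega> \<in> space M. \<alpha> R1 D \<omega> \<in> A1} \<ge> t1 / (6 * \<sigma>2 R1 D)"
    unfolding A1_def using gauss_lower[OF M d(2) s(2) t1(1,2)] by simp
  have p2: "measure M {\<omega> \<in> space M. \<alpha> R2 D \<omega> \<in> A1} \<ge> t1 / (6 * \<sigma>2 R2 D)"
    unfolding A1_def using gauss_lower[OF M d(3) s(3) t1(1,3)] by simp
  have p3: "measure M {\<omega> \<in> space M. \<alpha> S R1 \<omega> \<in> B} \<ge> 1/2"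
    unfolding B_def using gauss_tail[OF M d(4) s(4) T0] Tle by simp
  have p4: "measure M {\<omega> \<in> space M. \<alpha> S R2 \<omega> \<in> B} \<ge> 1/2"
    unfolding B_def using gauss_tail[OF M d(5) s(5) T0] Tle by simp
  have nn: "t0 / (6 * \<sigma>2 S D) \<ge> 0" "t1 / (6 * \<sigma>2 R1 D) \<ge> 0" "t1 / (6 * \<sigma>2 R2 D) \<ge> 0"
    unfolding t0_def t1_def using \<rho>0 s Q1 by auto
  have "t0 / (6 * \<sigma>2 S D) * (t1 / (6 * \<sigma>2 R1 D)) * (t1 / (6 * \<sigma>2 R2 D)) * (1/2) * (1/2) \<le> measure M E0"
    unfolding mE0
    by (intro mult_mono p0 p1 p2 p3 p4 nn mult_nonneg_nonneg measure_nonneg) auto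
  also have "\<dots> \<le> measure M Out" by (rule finite_measure_mono[OF sub Outm])
  also have "t0 / (6 * \<sigma>2 S D) * (t1 / (6 * \<sigma>2 R1 D)) * (t1 / (6 * \<sigma>2 R2 D)) * (1/2) * (1/2) =
      Q\<^sup>2 / (221184 * \<rho>^3 * \<sigma>2 S D * \<sigma>2 R1 D * \<sigma>2 R2 D)"
    unfolding t0_def t1_def using \<rho>0 s by (simp add: field_simps power2_eq_square power3_eq_cube)
  finally show ?thesis unfolding P Q_def R_def \<rho>_def .
qed



lemma geom_half: "(\<Sum>j<N. (1/2::real)^j) = 2 - 2 * (1/2)^N"
  by (induction N) (auto simp: power_Suc)

lemma dyadic_floor:
  fixes y :: real assumes "y \<ge> 1"
  shows "\<exists>j::nat. 2^j \<le> y \<and> y < 2^(j+1)"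
proof -
  define k where "k = \<lfloor>log 2 y\<rfloor>"
  have lg: "log 2 y \<ge> 0" using assms by simp
  then have k0: "k \<ge> 0" unfolding k_def by simp
  define j where "j = nat k"
  have jk: "real j = of_int k" unfolding j_def using k0 by simp
  have "2 powr real j \<le> 2 powr log 2 y" unfolding jk k_def by (intro powr_mono) auto
  moreover have "2 powr log 2 y < 2 powr (real j + 1)"
    unfolding jk k_def by (intro powr_less_mono) linarith+
  moreover have "2 powr log 2 y = y" using assms by simp
  moreover have "2 powr real j = 2^j" by (simp add: powr_realpow)
  moreover have "2 powr (real j + 1) = 2^(j+1)" by (metis of_nat_Suc powr_realpow Suc_eq_plus1 add.commute zero_less_numeral)
  ultimately show ?thesis by auto
qed

lemma upper_bound_fixed:
  fixes M :: "'a measure" and \<alpha> :: "node \<Rightarrow> node \<Rightarrow> 'a \<Rightarrow> complex"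
  assumes M: "prob_space M"
    and indep: "prob_space.indep_vars M (\<lambda>_. borel) (\<lambda>l. \<alpha> (fst l) (snd l)) links"
    and distr: "\<And>i j. (i, j) \<in> links \<Longrightarrow> distributed M lborel (\<alpha> i j) (cgauss_density (\<sigma>2 i j))"
    and var_pos: "\<And>i j. (i, j) \<in> links \<Longrightarrow> \<sigma>2 i j > 0"
    and r: "0 < r" and Bw: "Bw > 0" and snr: "snr > 0"
    and HC: "\<And>\<rho> u v. \<rho> \<ge> 0 \<Longrightarrow> Jint \<rho> Bw tau u v \<ge> Bw * ln (1 + \<rho> * max ((cmod u)\<^sup>2) ((cmod v)\<^sup>2)) - C"
  shows "outage_prob M \<alpha> \<sigma>2 r Bw tau snr \<le>
     32 * (exp (C / Bw))\<^sup>2 * (exp (2 * rate r (\<sigma>2 S D) snr))\<^sup>2 / ((rho0 snr)^3 * \<sigma>2 S D * \<sigma>2 R1 D * \<sigma>2 R2 D)"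
proof -
  interpret prob_space M by (rule M)
  define \<rho> where "\<rho> = rho0 snr"
  define R where "R = rate r (\<sigma>2 S D) snr"
  define Q where "Q = exp (2 * R)"
  define K where "K = exp (C / Bw)"
  have \<rho>0: "\<rho> > 0" unfolding \<rho>_def rho0_def using snr by simp
  have s: "\<sigma>2 S D > 0" "\<sigma>2 R1 D > 0" "\<sigma>2 R2 D > 0"
    by (auto intro!: var_pos simp: links_def)
  have d: "distributed M lborel (\<alpha> S D) (cgauss_density (\<sigma>2 S D))"
    "distributed M lborel (\<alpha> R1 D) (cgauss_density (\<sigma>2 R1 D))"
    "distributed M lborel (\<alpha> R2 D) (cgauss_density (\<sigma>2 R2 D))"
    by (auto intro!: distr simp: links_def)
  have K0: "K > 0" "Q > 0" unfolding K_def Q_def by auto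
  define Out where "Out = {\<omega> \<in> space M.
      ln (1 + \<rho> * (cmod (\<alpha> S D \<omega>))\<^sup>2) / 2 + Jint \<rho> Bw tau (\<alpha> R1 D \<omega>) (\<alpha> R2 D \<omega>) / (2 * Bw) < R
      \<and> decodes snr R (\<alpha> S R1 \<omega>) \<and> decodes snr R (\<alpha> S R2 \<omega>)}"
  have P: "outage_prob M \<alpha> \<sigma>2 r Bw tau snr = measure M Out"
    unfolding outage_eq Out_def \<rho>_def R_def ..
  obtain N :: nat where N: "K * Q < 2^N" using real_arch_pow[of 2 "K * Q"] by auto
  define F where "F j = {\<omega> \<in> space M. \<alpha> S D \<omega> \<in> {z. (cmod z)\<^sup>2 \<le> 2^(j+1) / \<rho>}
     \<and> \<alpha> R1 D \<omega> \<in> {z. (cmod z)\<^sup>2 \<le> K * Q / (2^j * \<rho>)} \<and> \<alpha> R2 D \<omega> \<in> {z. (cmod z)\<^sup>2 \<le> K * Q / (2^j * \<rho>)}}"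
    for j :: nat
  have key: "(1 + \<rho> * (cmod (\<alpha> S D \<omega>))\<^sup>2) * (1 + \<rho> * max ((cmod (\<alpha> R1 D \<omega>))\<^sup>2) ((cmod (\<alpha> R2 D \<omega>))\<^sup>2)) < K * Q"
    if "\<omega> \<in> Out" for \<omega>
  proof -
    define x0 where "x0 = 1 + \<rho> * (cmod (\<alpha> S D \<omega>))\<^sup>2"
    define x1 where "x1 = 1 + \<rho> * max ((cmod (\<alpha> R1 D \<omega>))\<^sup>2) ((cmod (\<alpha> R2 D \<omega>))\<^sup>2)"
    have x: "x0 \<ge> 1" "x1 \<ge> 1" unfolding x0_def x1_def using \<rho>0 by (auto intro!: mult_nonneg_nonneg simp: le_max_iff_disj)
    have o: "ln x0 / 2 + Jint \<rho> Bw tau (\<alpha> R1 D \<omega>) (\<alpha> R2 D \<omega>) / (2 * Bw) < R"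
      using that unfolding Out_def x0_def by auto
    have j: "Jint \<rho> Bw tau (\<alpha> R1 D \<omega>) (\<alpha> R2 D \<omega>) \<ge> Bw * ln x1 - C"
      unfolding x1_def using HC \<rho>0 by simp
    define cb where "cb = C / Bw"
    define jj where "jj = Jint \<rho> Bw tau (\<alpha> R1 D \<omega>) (\<alpha> R2 D \<omega>) / (2 * Bw)"
    have j2: "jj \<ge> (Bw * ln x1 - C) / (2 * Bw)" unfolding jj_def using j Bw by (intro divide_right_mono) auto
    have "(Bw * ln x1 - C) / (2 * Bw) = ln x1 / 2 - cb / 2" unfolding cb_def using Bw by (simp add: field_simps)
    then have "ln x0 + ln x1 < 2 * R + cb" using o j2 unfolding jj_def[symmetric] by linarith
    then have "ln x0 + ln x1 < 2 * R + C / Bw" unfolding cb_def .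
    then have "ln (x0 * x1) < 2 * R + C / Bw" using x by (simp add: ln_mult_pos)
    then have "exp (ln (x0 * x1)) < exp (2 * R + C / Bw)" by simp
    then have "x0 * x1 < exp (2 * R) * exp (C / Bw)" using x by (simp add: exp_add)
    then show ?thesis unfolding x0_def x1_def K_def Q_def by (simp add: mult.commute)
  qed
  have sub: "Out \<subseteq> (\<Union>j<N. F j)"
  proof
    fix \<omega> assume \<omega>: "\<omega> \<in> Out"
    define x0 where "x0 = 1 + \<rho> * (cmod (\<alpha> S D \<omega>))\<^sup>2"
    have x0: "x0 \<ge> 1" unfolding x0_def using \<rho>0 by auto
    obtain j :: nat where j: "2^j \<le> x0" "x0 < 2^(j+1)" using dyadic_floor[OF x0] by auto
    have kb: "x0 * (1 + \<rho> * (cmod (\<alpha> R1 D \<omega>))\<^sup>2) < K * Q" "x0 * (1 + \<rho> * (cmod (\<alpha> R2 D \<omega>))\<^sup>2) < K * Q"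
    proof -
      have "x0 * (1 + \<rho> * (cmod (\<alpha> R1 D \<omega>))\<^sup>2) \<le> x0 * (1 + \<rho> * max ((cmod (\<alpha> R1 D \<omega>))\<^sup>2) ((cmod (\<alpha> R2 D \<omega>))\<^sup>2))"
        "x0 * (1 + \<rho> * (cmod (\<alpha> R2 D \<omega>))\<^sup>2) \<le> x0 * (1 + \<rho> * max ((cmod (\<alpha> R1 D \<omega>))\<^sup>2) ((cmod (\<alpha> R2 D \<omega>))\<^sup>2))"
        using x0 \<rho>0 by (auto intro!: mult_left_mono)
      then show "x0 * (1 + \<rho> * (cmod (\<alpha> R1 D \<omega>))\<^sup>2) < K * Q" "x0 * (1 + \<rho> * (cmod (\<alpha> R2 D \<omega>))\<^sup>2) < K * Q"
        using key[OF \<omega>] unfolding x0_def by linarith+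
    qed
    have jN: "j < N"
    proof -
      have "x0 \<le> x0 * (1 + \<rho> * (cmod (\<alpha> R1 D \<omega>))\<^sup>2)" using x0 \<rho>0 by simp
      then have "(2::real)^j < 2^N" using j(1) kb(1) N by linarith
      then show ?thesis by simp
    qed
    have a0: "(cmod (\<alpha> S D \<omega>))\<^sup>2 \<le> 2^(j+1) / \<rho>"
    proof -
      have "\<rho> * (cmod (\<alpha> S D \<omega>))\<^sup>2 \<le> 2^(j+1)" using j(2) unfolding x0_def by simp
      then show ?thesis using \<rho>0 by (simp add: le_divide_eq mult.commute)
    qed
    have ai: "(cmod (\<alpha> k D \<omega>))\<^sup>2 \<le> K * Q / (2^j * \<rho>)"
      if "x0 * (1 + \<rho> * (cmod (\<alpha> k D \<omega>))\<^sup>2) < K * Q" for k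
    proof -
      have "2^j * (1 + \<rho> * (cmod (\<alpha> k D \<omega>))\<^sup>2) \<le> x0 * (1 + \<rho> * (cmod (\<alpha> k D \<omega>))\<^sup>2)"
        using j(1) \<rho>0 by (intro mult_right_mono) auto
      moreover have "2^j * (\<rho> * (cmod (\<alpha> k D \<omega>))\<^sup>2) \<le> 2^j * (1 + \<rho> * (cmod (\<alpha> k D \<omega>))\<^sup>2)"
        by (intro mult_left_mono) auto
      ultimately have "2^j * (\<rho> * (cmod (\<alpha> k D \<omega>))\<^sup>2) \<le> K * Q" using that by linarith
      then show ?thesis using \<rho>0 by (simp add: le_divide_eq mult.commute mult.left_commute)
    qed
    have "\<omega> \<in> F j" unfolding F_def using \<omega> a0 ai[OF kb(1)] ai[OF kb(2)] unfolding Out_def by auto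
    then show "\<omega> \<in> (\<Union>j<N. F j)" using jN by auto
  qed
  have Fm: "F j \<in> sets M" for j
  proof -
    have "\<alpha> S D \<in> borel_measurable M" "\<alpha> R1 D \<in> borel_measurable M" "\<alpha> R2 D \<in> borel_measurable M"
      using distributed_measurable[OF d(1)] distributed_measurable[OF d(2)] distributed_measurable[OF d(3)] by auto
    then show ?thesis unfolding F_def by measurable
  qed
  have pF: "measure M (F j) \<le> 16 * K\<^sup>2 * Q\<^sup>2 / (\<rho>^3 * \<sigma>2 S D * \<sigma>2 R1 D * \<sigma>2 R2 D) * (1/2)^j" for j
  proof -
    have mF: "measure M (F j) = measure M {\<omega> \<in> space M. \<alpha> S D \<omega> \<in> {z. (cmod z)\<^sup>2 \<le> 2^(j+1) / \<rho>}}
       * measure M {\<omega> \<in> space M. \<alpha> R1 D \<omega> \<in> {z. (cmod z)\<^sup>2 \<le> K * Q / (2^j * \<rho>)}}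
       * measure M {\<omega> \<in> space M. \<alpha> R2 D \<omega> \<in> {z. (cmod z)\<^sup>2 \<le> K * Q / (2^j * \<rho>)}}"
      unfolding F_def by (rule indep3[OF M indep]) simp_all
    have u0: "measure M {\<omega> \<in> space M. \<alpha> S D \<omega> \<in> {z. (cmod z)\<^sup>2 \<le> 2^(j+1) / \<rho>}} \<le> 2 * (2^(j+1) / \<rho>) / \<sigma>2 S D"
      using gauss_upper[OF M d(1) s(1), of "2^(j+1) / \<rho>"] \<rho>0 by simp
    have u1: "measure M {\<omega> \<in> space M. \<alpha> R1 D \<omega> \<in> {z. (cmod z)\<^sup>2 \<le> K * Q / (2^j * \<rho>)}} \<le> 2 * (K * Q / (2^j * \<rho>)) / \<sigma>2 R1 D"
      using gauss_upper[OF M d(2) s(2), of "K * Q / (2^j * \<rho>)"] \<rho>0 K0 by simp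
    have u2: "measure M {\<omega> \<in> space M. \<alpha> R2 D \<omega> \<in> {z. (cmod z)\<^sup>2 \<le> K * Q / (2^j * \<rho>)}} \<le> 2 * (K * Q / (2^j * \<rho>)) / \<sigma>2 R2 D"
      using gauss_upper[OF M d(3) s(3), of "K * Q / (2^j * \<rho>)"] \<rho>0 K0 by simp
    have "measure M (F j) \<le> (2 * (2^(j+1) / \<rho>) / \<sigma>2 S D) * (2 * (K * Q / (2^j * \<rho>)) / \<sigma>2 R1 D)
        * (2 * (K * Q / (2^j * \<rho>)) / \<sigma>2 R2 D)"
      unfolding mF by (intro mult_mono u0 u1 u2 mult_nonneg_nonneg measure_nonneg) (use \<rho>0 K0 s in auto)
    also have "\<dots> = 16 * K\<^sup>2 * Q\<^sup>2 / (\<rho>^3 * \<sigma>2 S D * \<sigma>2 R1 D * \<sigma>2 R2 D) * (1/2)^j"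
      using \<rho>0 s by (simp add: field_simps power2_eq_square power3_eq_cube power_one_over)
    finally show ?thesis .
  qed
  have "measure M Out \<le> measure M (\<Union>j<N. F j)"
    by (rule finite_measure_mono[OF sub]) (use Fm in auto)
  also have "\<dots> \<le> (\<Sum>j<N. measure M (F j))"
    by (rule finite_measure_subadditive_finite) (use Fm in auto)
  also have "\<dots> \<le> (\<Sum>j<N. 16 * K\<^sup>2 * Q\<^sup>2 / (\<rho>^3 * \<sigma>2 S D * \<sigma>2 R1 D * \<sigma>2 R2 D) * (1/2)^j)"
    by (intro sum_mono pF)
  also have "\<dots> = 16 * K\<^sup>2 * Q\<^sup>2 / (\<rho>^3 * \<sigma>2 S D * \<sigma>2 R1 D * \<sigma>2 R2 D) * (\<Sum>j<N. (1/2)^j)"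
    by (simp only: sum_distrib_left)
  also have "\<dots> = 16 * K\<^sup>2 * Q\<^sup>2 / (\<rho>^3 * \<sigma>2 S D * \<sigma>2 R1 D * \<sigma>2 R2 D) * (2 - 2 * (1/2)^N)"
    by (simp only: geom_half)
  also have "\<dots> \<le> 16 * K\<^sup>2 * Q\<^sup>2 / (\<rho>^3 * \<sigma>2 S D * \<sigma>2 R1 D * \<sigma>2 R2 D) * 2"
    using \<rho>0 s by (intro mult_left_mono) auto
  finally show ?thesis unfolding P K_def Q_def R_def \<rho>_def by simp
qed



lemma powr_split: "(y::real) > 0 \<Longrightarrow> y powr (-(3 - 4 * r)) = y powr (4 * r) / y^3"
proof -
  assume y: "y > 0"
  have "y powr (-(3 - 4 * r)) = y powr (4 * r - 3)" by (simp add: algebra_simps)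
  also have "\<dots> = y powr (4 * r) / y powr 3" by (rule powr_diff)
  also have "y powr 3 = y^3" using powr_realpow[OF y, of 3] by simp
  finally show ?thesis .
qed

lemma main_core:
  fixes M :: "'a measure"
    and \<alpha> :: "node \<Rightarrow> node \<Rightarrow> 'a \<Rightarrow> complex"
    and \<sigma>2 :: "node \<Rightarrow> node \<Rightarrow> real"
    and r Bw :: real
    and tau :: "node \<Rightarrow> real"
  assumes M: "prob_space M"
    and indep: "prob_space.indep_vars M (\<lambda>_. borel) (\<lambda>l. \<alpha> (fst l) (snd l)) links"
    and distr: "\<And>i j. (i, j) \<in> links \<Longrightarrow>
                  distributed M lborel (\<alpha> i j) (cgauss_density (\<sigma>2 i j))"
    and var_pos: "\<And>i j. (i, j) \<in> links \<Longrightarrow> \<sigma>2 i j > 0"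
    and r: "0 < r" "r < 1 / 2"
    and Bw: "Bw > 0"
    and tne: "tau R1 \<noteq> tau R2"
  shows "\<exists>c1 c2 snr0. c1 > 0 \<and> c2 > 0 \<and> snr0 \<ge> 1 / \<sigma>2 S D \<and>
          (\<forall>snr. snr > 0 \<and> snr \<ge> snr0 \<longrightarrow>
             c1 * (\<sigma>2 S D * snr) powr (- (3 - 4 * r)) \<le> outage_prob M \<alpha> \<sigma>2 r Bw tau snr \<and>
             outage_prob M \<alpha> \<sigma>2 r Bw tau snr \<le> c2 * (\<sigma>2 S D * snr) powr (- (3 - 4 * r)))"
proof -
  define s0 where "s0 = \<sigma>2 S D"
  define s1 where "s1 = \<sigma>2 R1 D"
  define s2 where "s2 = \<sigma>2 R2 D"
  define q1 where "q1 = \<sigma>2 S R1"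
  define q2 where "q2 = \<sigma>2 S R2"
  have s: "s0 > 0" "s1 > 0" "s2 > 0" "q1 > 0" "q2 > 0"
    unfolding s0_def s1_def s2_def q1_def q2_def by (auto intro!: var_pos simp: links_def)
  obtain C where C0: "C \<ge> 0" and HC0: "\<forall>\<rho> u v. \<rho> \<ge> 0 \<longrightarrow>
    integral {-Bw/2..Bw/2} (\<lambda>f. ln (1 + \<rho> * (cmod (u * cis (2 * pi * f * tau R1) + v * cis (2 * pi * f * tau R2)))\<^sup>2))
      \<ge> Bw * ln (1 + \<rho> * max ((cmod u)\<^sup>2) ((cmod v)\<^sup>2)) - C"
    using freq_lower[OF Bw tne] by blast
  have HC: "\<And>\<rho> u v. \<rho> \<ge> 0 \<Longrightarrow> Jint \<rho> Bw tau u v \<ge> Bw * ln (1 + \<rho> * max ((cmod u)\<^sup>2) ((cmod v)\<^sup>2)) - C"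
    using HC0 unfolding Jint_def by blast
  define K where "K = exp (C / Bw)"
  define m where "m = min (min (16 * s1) (16 * s2)) (min (q1 / 4) (q2 / 4))"
  have m0: "m > 0" unfolding m_def using s by simp
  define Y1 where "Y1 = 4 powr (1 / (2 * r)) + 1"
  define Y2 where "Y2 = (m / (3 * s0)) powr (1 / (2 * r - 1))"
  define x0 where "x0 = max (max (1 / s0) (3 / (2 * s0))) (max (Y1 / s0) (Y2 / s0))"
  define c1 where "c1 = 27 * s0\<^sup>2 / (1769472 * s1 * s2)"
  define c2 where "c2 = 432 * K\<^sup>2 * s0\<^sup>2 / (s1 * s2)"
  have c1p: "c1 > 0" unfolding c1_def using s by simp
  have c2p: "c2 > 0" unfolding c2_def K_def using s by simp
  have "\<forall>snr. snr > 0 \<and> snr \<ge> x0 \<longrightarrow>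
             c1 * (s0 * snr) powr (- (3 - 4 * r)) \<le> outage_prob M \<alpha> \<sigma>2 r Bw tau snr \<and>
             outage_prob M \<alpha> \<sigma>2 r Bw tau snr \<le> c2 * (s0 * snr) powr (- (3 - 4 * r))"
  proof (intro allI impI)
    fix x :: real assume x: "x > 0 \<and> x \<ge> x0"
    then have x0: "x > 0" and xx: "x \<ge> x0" by auto
    define y where "y = s0 * x"
    define \<rho> where "\<rho> = rho0 x"
    define Q where "Q = exp (2 * rate r s0 x)"
    have y0: "y > 0" unfolding y_def using s x0 by simp
    have xge: "x \<ge> 1 / s0" "x \<ge> 3 / (2 * s0)" "x \<ge> Y1 / s0" "x \<ge> Y2 / s0" using xx unfolding x0_def by auto
    have y1: "y \<ge> 1" "y \<ge> Y1" "y \<ge> Y2" "y \<ge> 3 / 2"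
      using xge s(1) unfolding y_def by (auto simp: divide_le_eq algebra_simps)
    have \<rho>y: "\<rho> = 2 * y / (3 * s0)" unfolding \<rho>_def rho0_def y_def using s by simp
    have \<rho>0: "\<rho> > 0" unfolding \<rho>y using y0 s by simp
    have Qe: "Q = (1 + y) powr (2 * r)"
      unfolding Q_def rate_def y_def using y0[unfolded y_def] s by (simp add: powr_def mult.commute)
    have Qlo: "Q \<ge> y powr (2 * r)" unfolding Qe using r y0 by (intro powr_mono2) auto
    have Qhi: "Q \<le> 2 * y powr (2 * r)"
    proof -
      have "Q \<le> (2 * y) powr (2 * r)" unfolding Qe using r y0 y1 by (intro powr_mono2) auto
      also have "\<dots> = 2 powr (2 * r) * y powr (2 * r)" using y0 by (simp add: powr_mult)
      also have "2 powr (2 * r) \<le> 2 powr 1" using r by (intro powr_mono) auto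
      then have "2 powr (2 * r) * y powr (2 * r) \<le> 2 * y powr (2 * r)" by (intro mult_right_mono) auto
      finally show ?thesis .
    qed
    have sq: "(y powr (2 * r))\<^sup>2 = y powr (4 * r)"
      by (simp add: power2_eq_square powr_add[symmetric])
    have Q2lo: "Q\<^sup>2 \<ge> y powr (4 * r)"
      using power_mono[OF Qlo, of 2] sq by simp
    have Q2hi: "Q\<^sup>2 \<le> 4 * y powr (4 * r)"
    proof -
      have "Q\<^sup>2 \<le> (2 * y powr (2 * r))\<^sup>2" using Qhi Qlo by (intro power_mono) auto
      then show ?thesis using sq by (simp add: power_mult_distrib)
    qed
    have split: "(s0 * x) powr (- (3 - 4 * r)) = y powr (4 * r) / y^3" unfolding y_def[symmetric]
      by (rule powr_split[OF y0])
    have UB: "outage_prob M \<alpha> \<sigma>2 r Bw tau x \<le> 32 * K\<^sup>2 * Q\<^sup>2 / (\<rho>^3 * s0 * s1 * s2)"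
      using upper_bound_fixed[OF M indep distr var_pos r(1) Bw x0 HC]
      unfolding K_def Q_def \<rho>_def s0_def s1_def s2_def by simp
    have "32 * K\<^sup>2 * Q\<^sup>2 / (\<rho>^3 * s0 * s1 * s2) \<le> 32 * K\<^sup>2 * (4 * y powr (4 * r)) / (\<rho>^3 * s0 * s1 * s2)"
      using Q2hi \<rho>0 s by (intro divide_right_mono mult_left_mono) auto
    also have "\<dots> = c2 * (y powr (4 * r) / y^3)"
      unfolding c2_def \<rho>y using s y0 by (simp add: field_simps power3_eq_cube power2_eq_square)
    finally have U: "outage_prob M \<alpha> \<sigma>2 r Bw tau x \<le> c2 * (s0 * x) powr (- (3 - 4 * r))"
      using UB unfolding split by linarith
    have Q4: "Q > 4"
    proof -
      have "4 = (4 powr (1 / (2 * r))) powr (2 * r)" using r by (simp add: powr_powr)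
      also have "\<dots> < y powr (2 * r)" using y1(2) r unfolding Y1_def by (intro powr_less_mono2) auto
      finally show ?thesis using Qlo by linarith
    qed
    have Qr: "Q / \<rho> \<le> m"
    proof -
      have "Q / \<rho> \<le> 2 * y powr (2 * r) / \<rho>" using Qhi \<rho>0 by (intro divide_right_mono) auto
      also have "\<dots> = 3 * s0 * (y powr (2 * r) / y powr 1)" unfolding \<rho>y using s y0 by (simp add: field_simps)
      also have "y powr (2 * r) / y powr 1 = y powr (2 * r - 1)" by (rule powr_diff[symmetric])
      also have "y powr (2 * r - 1) \<le> Y2 powr (2 * r - 1)"
      proof (rule powr_mono2')
        show "2 * r - 1 \<le> 0" using r by simp
        show "0 < Y2" unfolding Y2_def using m0 s by simp
        show "Y2 \<le> y" using y1 by simp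
      qed
      also have "Y2 powr (2 * r - 1) = m / (3 * s0)"
        unfolding Y2_def using r m0 s by (simp add: powr_powr)
      finally show ?thesis using s by (simp add: field_simps)
    qed
    have LB: "outage_prob M \<alpha> \<sigma>2 r Bw tau x \<ge> Q\<^sup>2 / (221184 * \<rho>^3 * s0 * s1 * s2)"
    proof -
      have e: "Q = exp (2 * rate r (\<sigma>2 S D) x)" "\<rho> = rho0 x" unfolding Q_def \<rho>_def s0_def by simp_all
      have q: "Q / \<rho> \<le> 16 * s1" "Q / \<rho> \<le> 16 * s2" "Q / \<rho> \<le> q1 / 4" "Q / \<rho> \<le> q2 / 4"
        using Qr unfolding m_def by auto
      have c0': "1 / \<rho> \<le> s0" unfolding \<rho>y using y1(4) s by (simp add: field_simps)
      show ?thesis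
        using lower_bound_fixed[OF M indep distr var_pos r(1) Bw x0, of tau]
          Q4 c0' q \<rho>0 unfolding e[symmetric] s0_def s1_def s2_def q1_def q2_def
        by (simp add: divide_le_eq le_divide_eq mult.commute mult.left_commute)
    qed
    have "c1 * (y powr (4 * r) / y^3) = y powr (4 * r) / (221184 * \<rho>^3 * s0 * s1 * s2)"
      unfolding c1_def \<rho>y using s y0 by (simp add: field_simps power3_eq_cube power2_eq_square)
    also have "\<dots> \<le> Q\<^sup>2 / (221184 * \<rho>^3 * s0 * s1 * s2)"
      using Q2lo \<rho>0 s by (intro divide_right_mono) auto
    finally have L: "c1 * (s0 * x) powr (- (3 - 4 * r)) \<le> outage_prob M \<alpha> \<sigma>2 r Bw tau x"
      using LB unfolding split by linarith
    show "c1 * (s0 * x) powr (- (3 - 4 * r)) \<le> outage_prob M \<alpha> \<sigma>2 r Bw tau x \<and>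
             outage_prob M \<alpha> \<sigma>2 r Bw tau x \<le> c2 * (s0 * x) powr (- (3 - 4 * r))"
      using L U by simp
  qed
  moreover have "x0 \<ge> 1 / s0" unfolding x0_def by simp
  ultimately show ?thesis using c1p c2p unfolding s0_def by blast
qed



theorem theorem2:
  fixes M :: "'a measure"
    and \<alpha> :: "node \<Rightarrow> node \<Rightarrow> 'a \<Rightarrow> complex"
    and \<sigma>2 :: "node \<Rightarrow> node \<Rightarrow> real"
    and r Bw :: real
    and tau :: "node \<Rightarrow> real"
  assumes M: "prob_space M"
    and indep: "prob_space.indep_vars M (\<lambda>_. borel) (\<lambda>l. \<alpha> (fst l) (snd l)) links"
    and distr: "\<And>i j. (i, j) \<in> links \<Longrightarrow>
                  distributed M lborel (\<alpha> i j) (cgauss_density (\<sigma>2 i j))"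
    and var_pos: "\<And>i j. (i, j) \<in> links \<Longrightarrow> \<sigma>2 i j > 0"
    and r: "0 < r" "r < 1 / 2"
    and Bw: "Bw > 0"
    and tau: "tau R1 \<ge> 0" "tau R2 \<ge> 0"
  shows
    "(\<bar>tau R2 - tau R1\<bar> * Bw > 2 \<and> \<bar>tau R2 - tau R1\<bar> * Bw \<notin> \<int> \<longrightarrow>
       (\<exists>c1 c2 snr0. c1 > 0 \<and> c2 > 0 \<and>
          (\<forall>snr. snr > 0 \<and> snr \<ge> snr0 \<longrightarrow>
             c1 * (\<sigma>2 S D * snr) powr (- (3 - 4 * r)) \<le> outage_prob M \<alpha> \<sigma>2 r Bw tau snr \<and>
             outage_prob M \<alpha> \<sigma>2 r Bw tau snr \<le> c2 * (\<sigma>2 S D * snr) powr (- (3 - 6 * r)))))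
   \<and> ((\<exists>n::nat. n > 0 \<and> \<bar>tau R2 - tau R1\<bar> * Bw = real n) \<longrightarrow>
       (\<exists>c1 c2 snr0. c1 > 0 \<and> c2 > 0 \<and>
          (\<forall>snr. snr > 0 \<and> snr \<ge> snr0 \<longrightarrow>
             c1 * (\<sigma>2 S D * snr) powr (- (3 - 4 * r)) \<le> outage_prob M \<alpha> \<sigma>2 r Bw tau snr \<and>
             outage_prob M \<alpha> \<sigma>2 r Bw tau snr \<le> c2 * (\<sigma>2 S D * snr) powr (- (3 - 4 * r)))))"
proof (intro conjI impI)
  have sp: "\<sigma>2 S D > 0" by (rule var_pos) (simp add: links_def)
  assume h: "\<bar>tau R2 - tau R1\<bar> * Bw > 2 \<and> \<bar>tau R2 - tau R1\<bar> * Bw \<notin> \<int>"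
  then have tne: "tau R1 \<noteq> tau R2" by auto
  obtain c1 c2 snr0 where c: "c1 > 0" "c2 > 0" "snr0 \<ge> 1 / \<sigma>2 S D" and
    H: "\<forall>snr. snr > 0 \<and> snr \<ge> snr0 \<longrightarrow>
             c1 * (\<sigma>2 S D * snr) powr (- (3 - 4 * r)) \<le> outage_prob M \<alpha> \<sigma>2 r Bw tau snr \<and>
             outage_prob M \<alpha> \<sigma>2 r Bw tau snr \<le> c2 * (\<sigma>2 S D * snr) powr (- (3 - 4 * r))"
    using main_core[OF M indep distr var_pos r Bw tne] by blast
  have "\<forall>snr. snr > 0 \<and> snr \<ge> snr0 \<longrightarrow>
             c1 * (\<sigma>2 S D * snr) powr (- (3 - 4 * r)) \<le> outage_prob M \<alpha> \<sigma>2 r Bw tau snr \<and>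
             outage_prob M \<alpha> \<sigma>2 r Bw tau snr \<le> c2 * (\<sigma>2 S D * snr) powr (- (3 - 6 * r))"
  proof (intro allI impI conjI)
    fix snr assume s: "snr > 0 \<and> snr \<ge> snr0"
    show "c1 * (\<sigma>2 S D * snr) powr (- (3 - 4 * r)) \<le> outage_prob M \<alpha> \<sigma>2 r Bw tau snr" using H s by blast
    have "1 \<le> snr0 * \<sigma>2 S D" using c(3) sp by (simp add: divide_le_eq)
    moreover have "snr0 * \<sigma>2 S D \<le> snr * \<sigma>2 S D" using s sp by (intro mult_right_mono) auto
    ultimately have y1: "\<sigma>2 S D * snr \<ge> 1" by (simp add: mult.commute)
    have "(\<sigma>2 S D * snr) powr (- (3 - 4 * r)) \<le> (\<sigma>2 S D * snr) powr (- (3 - 6 * r))"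
      using r y1 by (intro powr_mono) auto
    then have "c2 * (\<sigma>2 S D * snr) powr (- (3 - 4 * r)) \<le> c2 * (\<sigma>2 S D * snr) powr (- (3 - 6 * r))"
      using c(2) by (intro mult_left_mono) auto
    then show "outage_prob M \<alpha> \<sigma>2 r Bw tau snr \<le> c2 * (\<sigma>2 S D * snr) powr (- (3 - 6 * r))"
      using H s by fastforce
  qed
  then show "\<exists>c1 c2 snr0. c1 > 0 \<and> c2 > 0 \<and>
          (\<forall>snr. snr > 0 \<and> snr \<ge> snr0 \<longrightarrow>
             c1 * (\<sigma>2 S D * snr) powr (- (3 - 4 * r)) \<le> outage_prob M \<alpha> \<sigma>2 r Bw tau snr \<and>
             outage_prob M \<alpha> \<sigma>2 r Bw tau snr \<le> c2 * (\<sigma>2 S D * snr) powr (- (3 - 6 * r)))"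
    using c by blast
next
  assume "\<exists>n::nat. n > 0 \<and> \<bar>tau R2 - tau R1\<bar> * Bw = real n"
  then have tne: "tau R1 \<noteq> tau R2" by auto
  show "\<exists>c1 c2 snr0. c1 > 0 \<and> c2 > 0 \<and>
          (\<forall>snr. snr > 0 \<and> snr \<ge> snr0 \<longrightarrow>
             c1 * (\<sigma>2 S D * snr) powr (- (3 - 4 * r)) \<le> outage_prob M \<alpha> \<sigma>2 r Bw tau snr \<and>
             outage_prob M \<alpha> \<sigma>2 r Bw tau snr \<le> c2 * (\<sigma>2 S D * snr) powr (- (3 - 4 * r)))"
    using main_core[OF M indep distr var_pos r Bw tne] by blast
qed


end
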